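(* Let $m,n\ge0$, $A\subseteq\{1,\dots,m+n\}$ with $|A|=n$, and $w\in S_{m+n}$. Then $\mathrm{Dela}_A(\chi^w)=\chi^{w_{\le m}}\otimes\chi^{w_{>m}}$ if $w^{-1}(A)=\{m+1,\dots,m+n\}$, and $\mathrm{Dela}_A(\chi^w)=0$ otherwise.
   Context: Let $q$ be a prime power, $\mathfrak{ut}_N$ the additive group of strictly upper triangular $N\times N$ matrices over $\mathbb{F}_q$, $e_{ij}(t)$ the matrix with $t$ at $(i,j)$ and zeros elsewhere. For $w\in S_N$ (one-line notation), $\iota_k(w)=\#\{i<w^{-1}(k):w(i)>k\}$ and $\mathfrak{ut}_w=\{x\in\mathfrak{ut}_N:x_{ij}\ne0\Rightarrow0<j-i\le\iota_i(w)\}$. These subgroups form a lattice (closed under intersection and sum); its normal lattice supercharacter theory has supercharacters $\chi^w=\sum_\psi\psi(1)\psi$, summed over irreducible characters $\psi$ of $\mathfrak{ut}_N$ such that $\mathfrak{ut}_w$ is the largest lattice member contained in $\ker\psi$; $\mathrm{scf}(\mathfrak{ut}_N)$ is their span. With $N=m+n$, $|A|=n$: for $1\le i<j\le N$ let $c_i=N-\#\{a\in A:a>i\}$, $U_A=\{(i,j):i\in A,j>c_i\}$, $L_A=\{(i,j):i\in A,j\le c_i\}$, $U_A^\vee=\{(i,j):i\notin A,j\le c_i\}$, $R_A=\{(i,j):i\notin A,j>c_i\}$, and $\mathfrak{ut}_A,\mathfrak{l}_A,\mathfrak{ut}_A^\vee,\mathfrak{r}_A$ the subgroups of matrices supported there.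 Identify $\mathfrak{ut}_A^\vee\cong\mathfrak{ut}_m$ via $e_{ij}(t)\mapsto e_{i-k,j-k}(t)$, $k=\#\{a\in A:a<i\}$, and $\mathfrak{ut}_A\cong\mathfrak{ut}_n$ via $e_{ij}(t)\mapsto e_{i-\#\{b<i:b\notin A\},j-m}(t)$, so functions on $\mathfrak{ut}_A^\vee\times\mathfrak{ut}_A$ are elements of functions on $\mathfrak{ut}_m\times\mathfrak{ut}_n$. Delapsing: for $\gamma\in\mathrm{scf}(\mathfrak{ut}_N)$, $\mathrm{Dela}_A(\gamma)(u',u)=q^{-|L_A|-|R_A|}\sum_{l\in\mathfrak{l}_A,r\in\mathfrak{r}_A}\left(\frac{-1}{q-1}\right)^{\#\{(i,j):r_{ij}\ne0\}}\gamma(l+u'+u+r)$. For $w\in S_{m+n}$: $w_{\le m}(i)=w(i)-\#\{j>m:w(j)<w(i)\}$ ($1\le i\le m$) and $w_{>m}(j)=w(j+m)-\#\{i\le m:w(i)<w(j+m)\}$ ($1\le j\le n$), i.e. the standardizations of the first $m$ and last $n$ letters. *)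

theory Defs
  imports Complex_Main "HOL-Combinatorics.Permutations"
begin

text \<open>Matrices over the finite field 'a are functions nat => nat => 'a, 1-indexed.\<close>
type_synonym 'a mat = "nat \<Rightarrow> nat \<Rightarrow> 'a"

definition madd :: "'a::plus mat \<Rightarrow> 'a mat \<Rightarrow> 'a mat" where
  "madd x y = (\<lambda>i j. x i j + y i j)"

definition ut :: "nat \<Rightarrow> ('a::zero) mat set" where
  "ut N = {x. \<forall>i j. x i j \<noteq> 0 \<longrightarrow> 1 \<le> i \<and> i < j \<and> j \<le> N}"

definition supported :: "nat \<Rightarrow> (nat \<times> nat) set \<Rightarrow> ('a::zero) mat set" where
  "supported N P = {x \<in> ut N. \<forall>i j. x i j \<noteq> 0 \<longrightarrow> (i, j) \<in> P}"

text \<open>Irreducible characters of the (finite abelian) additive group ut N: group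
  homomorphisms into the multiplicative group of nonzero complex numbers,
  extended by 0 outside ut N.\<close>
definition irr_chars :: "nat \<Rightarrow> (('a::{finite,field}) mat \<Rightarrow> complex) set" where
  "irr_chars N = {\<psi>. (\<forall>x\<in>ut N. \<forall>y\<in>ut N. \<psi> (madd x y) = \<psi> x * \<psi> y)
                    \<and> (\<forall>x\<in>ut N. \<psi> x \<noteq> 0) \<and> (\<forall>x. x \<notin> ut N \<longrightarrow> \<psi> x = 0)}"

definition ker_char :: "nat \<Rightarrow> (('a::{finite,field}) mat \<Rightarrow> complex) \<Rightarrow> 'a mat set" where
  "ker_char N \<psi> = {x \<in> ut N. \<psi> x = 1}"

text \<open>Degree psi(1) of a character (value at the identity, the zero matrix).\<close>
definition char_degree :: "(('a::zero) mat \<Rightarrow> complex) \<Rightarrow> complex" where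
  "char_degree \<psi> = \<psi> (\<lambda>i j. 0)"

definition iota :: "nat \<Rightarrow> (nat \<Rightarrow> nat) \<Rightarrow> nat \<Rightarrow> nat" where
  "iota N w k = card {i \<in> {1..N}. i < inv w k \<and> w i > k}"

definition ut_perm :: "nat \<Rightarrow> (nat \<Rightarrow> nat) \<Rightarrow> ('a::zero) mat set" where
  "ut_perm N w = {x \<in> ut N. \<forall>i j. x i j \<noteq> 0 \<longrightarrow> 0 < j - i \<and> j - i \<le> iota N w i}"

definition largest_in_ker :: "nat \<Rightarrow> (nat \<Rightarrow> nat) \<Rightarrow> (('a::{finite,field}) mat \<Rightarrow> complex) \<Rightarrow> bool" where
  "largest_in_ker N w \<psi> \<longleftrightarrow>
     ut_perm N w \<subseteq> ker_char N \<psi> \<and>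
     (\<forall>v. v permutes {1..N} \<and> ut_perm N v \<subseteq> ker_char N \<psi> \<longrightarrow> ut_perm N v \<subseteq> (ut_perm N w :: 'a mat set))"

definition supchar :: "nat \<Rightarrow> (nat \<Rightarrow> nat) \<Rightarrow> ('a::{finite,field}) mat \<Rightarrow> complex" where
  "supchar N w x = (\<Sum>\<psi>\<in>{\<psi> \<in> irr_chars N. largest_in_ker N w \<psi>}. char_degree \<psi> * \<psi> x)"

definition cA :: "nat \<Rightarrow> nat set \<Rightarrow> nat \<Rightarrow> nat" where
  "cA N A i = N - card {a \<in> A. a > i}"

definition pos :: "nat \<Rightarrow> (nat \<times> nat) set" where
  "pos N = {(i, j). 1 \<le> i \<and> i < j \<and> j \<le> N}"

definition L_pos :: "nat \<Rightarrow> nat set \<Rightarrow> (nat \<times> nat) set" where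
  "L_pos N A = {(i, j) \<in> pos N. i \<in> A \<and> j \<le> cA N A i}"

definition R_pos :: "nat \<Rightarrow> nat set \<Rightarrow> (nat \<times> nat) set" where
  "R_pos N A = {(i, j) \<in> pos N. i \<notin> A \<and> j > cA N A i}"

text \<open>Inverse of the identification ut_A^vee = ut_m: e_ij(t) in ut_A^vee corresponds to
  e_{i-k,j-k}(t), k = #{a in A. a < i}.\<close>
definition emb_dual :: "nat \<Rightarrow> nat \<Rightarrow> nat set \<Rightarrow> ('a::zero) mat \<Rightarrow> 'a mat" where
  "emb_dual m n A u' = (\<lambda>i j. if (i, j) \<in> pos (m + n) \<and> i \<notin> A \<and> j \<le> cA (m + n) A i
      then (let k = card {a \<in> A. a < i} in u' (i - k) (j - k)) else 0)"

text \<open>Inverse of the identification ut_A = ut_n: e_ij(t) in ut_A corresponds to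
  e_{i - #{b<i, b notin A}, j - m}(t).\<close>
definition emb_A :: "nat \<Rightarrow> nat \<Rightarrow> nat set \<Rightarrow> ('a::zero) mat \<Rightarrow> 'a mat" where
  "emb_A m n A u = (\<lambda>i j. if (i, j) \<in> pos (m + n) \<and> i \<in> A \<and> j > cA (m + n) A i
      then u (i - card {b \<in> {1..<i}. b \<notin> A}) (j - m) else 0)"

definition Dela :: "nat \<Rightarrow> nat \<Rightarrow> nat set \<Rightarrow> (('a::{finite,field}) mat \<Rightarrow> complex)
                    \<Rightarrow> 'a mat \<Rightarrow> 'a mat \<Rightarrow> complex" where
  "Dela m n A \<gamma> u' u =
     (let N = m + n; q = of_nat (card (UNIV :: 'a set)) :: complex in
      (1 / q ^ (card (L_pos N A) + card (R_pos N A))) *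
      (\<Sum>l\<in>(supported N (L_pos N A) :: 'a mat set). \<Sum>r\<in>(supported N (R_pos N A) :: 'a mat set).
          (-1 / (q - 1)) ^ card {(i, j). r i j \<noteq> 0} *
          \<gamma> (madd (madd (madd l (emb_dual m n A u')) (emb_A m n A u)) r)))"

text \<open>Standardizations of the first m and the last n letters of w in S_{m+n}
  (extended by the identity outside their domains).\<close>
definition std_le :: "nat \<Rightarrow> nat \<Rightarrow> (nat \<Rightarrow> nat) \<Rightarrow> nat \<Rightarrow> nat" where
  "std_le m n w i = (if i \<in> {1..m}
      then w i - card {j \<in> {m+1..m+n}. w j < w i} else i)"

definition std_gt :: "nat \<Rightarrow> nat \<Rightarrow> (nat \<Rightarrow> nat) \<Rightarrow> nat \<Rightarrow> nat" where
  "std_gt m n w j = (if j \<in> {1..n}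
      then w (j + m) - card {i \<in> {1..m}. w i < w (j + m)} else j)"

end

theory Submission
  imports Defs "HOL-Computational_Algebra.Primes"
begin

lemma CHAR_pos_fin: "CHAR('a::{finite,field}) > 0"
proof -
  have "\<not> inj_on (of_nat :: nat \<Rightarrow> 'a) {0 .. card (UNIV :: 'a set)}"
  proof
    assume "inj_on (of_nat :: nat \<Rightarrow> 'a) {0 .. card (UNIV :: 'a set)}"
    hence "card {0 .. card (UNIV :: 'a set)} \<le> card (UNIV :: 'a set)"
      by (intro card_inj_on_le) auto
    thus False by simp
  qed
  then obtain a b where ab: "a \<in> {0 .. card (UNIV :: 'a set)}" "b \<in> {0 .. card (UNIV :: 'a set)}" "a \<noteq> b"
    "(of_nat a :: 'a) = of_nat b" unfolding inj_on_def by blast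
  show ?thesis
  proof (cases "a < b")
    case True
    hence "(of_nat (b - a) :: 'a) = 0" using ab(4) by (simp add: of_nat_diff)
    thus ?thesis using True CHAR_pos_iff by (metis zero_less_diff)
  next
    case False
    hence "(of_nat (a - b) :: 'a) = 0" using ab by (simp add: of_nat_diff)
    thus ?thesis using False ab(3) CHAR_pos_iff by (metis linorder_neqE_nat zero_less_diff)
  qed
qed

lemma CHAR_prime_fin: "prime CHAR('a::{finite,field})"
  using prime_CHAR_semidom[OF CHAR_pos_fin] .

definition zeta :: "nat \<Rightarrow> complex" where "zeta p = cis (2 * pi / p)"

lemma zeta_pow_p: "p > 0 \<Longrightarrow> zeta p ^ p = 1"
  unfolding zeta_def DeMoivre by simp

lemma zeta_pow_mod: "p > 0 \<Longrightarrow> zeta p ^ j = zeta p ^ (j mod p)"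
proof -
  assume p: "p > 0"
  have "zeta p ^ j = zeta p ^ (p * (j div p) + j mod p)" by simp
  also have "\<dots> = (zeta p ^ p) ^ (j div p) * zeta p ^ (j mod p)"
    by (simp only: power_add power_mult)
  finally show ?thesis using zeta_pow_p[OF p] by simp
qed

lemma zeta_ne_1: "p \<ge> 2 \<Longrightarrow> zeta p \<noteq> 1"
proof
  assume p: "p \<ge> 2" and z: "zeta p = 1"
  hence "cos (2 * pi / p) = 1" unfolding zeta_def by (metis cis.sel(1) one_complex.sel(1))
  from cos_one_2pi_int[THEN iffD1, OF this] obtain k :: int where k: "2 * pi / p = of_int k * 2 * pi" by blast
  hence e: "2 * pi * (1 / real p) = 2 * pi * of_int k" by (simp add: algebra_simps)
  have "1 / real p = k" by (rule mult_left_cancel[THEN iffD1, of "2*pi"]) (simp, rule e)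
  moreover have "0 < 1 / real p" "1 / real p < 1" using p by auto
  ultimately have "0 < (of_int k :: real)" "(of_int k :: real) < 1" by auto
  hence "0 < k" "k < 1" by simp_all
  thus False by simp
qed

definition achar :: "('a::{finite,field} \<Rightarrow> complex) set" where
  "achar = {l. (\<forall>x y. l (x + y) = l x * l y) \<and> (\<forall>x. l x \<noteq> 0)}"

lemma achar_0: "l \<in> achar \<Longrightarrow> l 0 = 1"
proof -
  assume "l \<in> achar"
  hence "l (0 + 0) = l 0 * l 0" "l 0 \<noteq> 0" unfolding achar_def by blast+
  thus ?thesis by simp
qed

lemma achar_add: "l \<in> achar \<Longrightarrow> l (x + y) = l x * l y"
  unfolding achar_def by blast

lemma achar_nz: "l \<in> achar \<Longrightarrow> l x \<noteq> 0"
  unfolding achar_def by blast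

lemma achar_ofnat: "l \<in> achar \<Longrightarrow> l (of_nat k * x) = l x ^ k"
  by (induction k) (auto simp: achar_0 achar_add distrib_right)

lemma achar_pow_CHAR: "l \<in> (achar :: ('a::{finite,field} \<Rightarrow> complex) set) \<Longrightarrow> l x ^ CHAR('a) = 1"
  using achar_ofnat[of l "CHAR('a)" x] by (simp add: achar_0)

lemma one_achar: "(\<lambda>_. 1) \<in> achar"
  unfolding achar_def by auto

lemma finite_achar: "finite (achar :: ('a::{finite,field} \<Rightarrow> complex) set)"
proof -
  let ?R = "{z::complex. z ^ CHAR('a) = 1}"
  have "finite ?R" using CHAR_pos_fin[where 'a='a] by (intro finite_roots_unity) auto
  hence "finite (PiE (UNIV :: 'a set) (\<lambda>_. ?R))" by (intro finite_PiE) auto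
  moreover have "(achar :: ('a \<Rightarrow> complex) set) \<subseteq> PiE UNIV (\<lambda>_. ?R)"
    using achar_pow_CHAR by (auto simp: PiE_def extensional_def)
  ultimately show ?thesis by (rule finite_subset[rotated])
qed

definition sgrp :: "'a::ab_group_add set \<Rightarrow> bool" where
  "sgrp H \<longleftrightarrow> 0 \<in> H \<and> (\<forall>x\<in>H. \<forall>y\<in>H. x + y \<in> H) \<and> (\<forall>x\<in>H. -x \<in> H)"

lemma sgrp_ofnat: "sgrp H \<Longrightarrow> x \<in> H \<Longrightarrow> of_nat k * (x::'a::ring_1) \<in> H"
  by (induction k) (auto simp: sgrp_def distrib_right)

lemma sgrp_ofint: "sgrp H \<Longrightarrow> x \<in> H \<Longrightarrow> of_int k * (x::'a::ring_1) \<in> H"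
proof (cases k rule: int_cases)
  case (nonneg n)
  assume "sgrp H" "x \<in> H"
  thus ?thesis using nonneg sgrp_ofnat[of H x n] by simp
next
  case (neg n)
  assume "sgrp H" "x \<in> H"
  hence "- (of_nat (Suc n) * x) \<in> H" using sgrp_ofnat[of H x "Suc n"] unfolding sgrp_def by blast
  thus ?thesis using neg by (simp del: of_nat_Suc)
qed

lemma exists_nontriv_achar: "\<exists>l\<in>(achar::('a::{finite,field} \<Rightarrow> complex) set). \<exists>s. l s \<noteq> 1"
proof -
  define p where "p = CHAR('a)"
  have pprime: "prime p" unfolding p_def by (rule CHAR_prime_fin)
  hence p2: "p \<ge> 2" by (simp add: prime_ge_2_nat)
  have ofp: "(of_nat p :: 'a) = 0" unfolding p_def by simp
  define S where "S = {H::'a set. sgrp H \<and> H \<noteq> UNIV}"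
  have "{0} \<in> S" unfolding S_def sgrp_def
    by (auto simp: set_eq_iff) (metis zero_neq_one)
  have "\<exists>x. (\<exists>K\<in>S. card K = x) \<and> (\<forall>y. (\<exists>K\<in>S. card K = y) \<longrightarrow> y \<le> x)"
    using \<open>{0} \<in> S\<close>
    by (intro ex_has_greatest_nat[where k="card {0::'a}" and b="card (UNIV::'a set)"])
       (use \<open>{0} \<in> S\<close> in \<open>force\<close>,
        auto simp: S_def intro!: psubset_card_mono)
  then obtain H where H: "H \<in> S" and Hmax: "\<And>K. K \<in> S \<Longrightarrow> card K \<le> card H" by blast
  have sH: "sgrp H" using H unfolding S_def by blast
  from H obtain g where g: "g \<notin> H" unfolding S_def by blast
  define H' where "H' = {h + of_nat j * g | h j. h \<in> H}"
  have "sgrp H'"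
    unfolding sgrp_def
  proof (intro conjI ballI)
    show "0 \<in> H'" unfolding H'_def using sH by (auto simp: sgrp_def intro!: exI[of _ 0])
  next
    fix x y assume "x \<in> H'" "y \<in> H'"
    then obtain h1 j1 h2 j2 where "x = h1 + of_nat j1 * g" "y = h2 + of_nat j2 * g" "h1 \<in> H" "h2 \<in> H"
      unfolding H'_def by blast
    moreover have "h1 + h2 \<in> H" using sH \<open>h1 \<in> H\<close> \<open>h2 \<in> H\<close> unfolding sgrp_def by blast
    ultimately show "x + y \<in> H'" unfolding H'_def
      by (auto intro!: exI[of _ "h1 + h2"] exI[of _ "j1 + j2"] simp: algebra_simps)
  next
    fix x assume "x \<in> H'"
    then obtain h j where x: "x = h + of_nat j * g" "h \<in> H" unfolding H'_def by blast
    have "-h \<in> H" using sH x(2) unfolding sgrp_def by blast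
    moreover have "(of_nat (j * (p - 1)) :: 'a) = - of_nat j"
      using p2 ofp by (simp add: of_nat_diff algebra_simps)
    ultimately show "- x \<in> H'" unfolding H'_def x
      by (auto intro!: exI[of _ "-h"] exI[of _ "j * (p - 1)"] simp: algebra_simps)
  qed
  have "H \<subseteq> H'"
  proof
    fix x assume "x \<in> H"
    moreover have "x = x + of_nat 0 * g" by simp
    ultimately show "x \<in> H'" unfolding H'_def by blast
  qed
  moreover have "g \<in> H'"
  proof -
    have "g = 0 + of_nat 1 * g" by simp
    moreover have "(0::'a) \<in> H" using sH unfolding sgrp_def by blast
    ultimately show ?thesis unfolding H'_def by blast
  qed
  ultimately have "H \<subset> H'" using g by blast
  hence "card H < card H'" by (intro psubset_card_mono) auto
  hence "H' \<notin> S" using Hmax by force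
  hence H'U: "H' = UNIV" using \<open>sgrp H'\<close> unfolding S_def by blast
  have uniq: "j1 mod p = j2 mod p"
    if "h1 \<in> H" "h2 \<in> H" "h1 + of_nat j1 * g = h2 + of_nat j2 * g" for h1 h2 j1 j2
  proof (rule ccontr)
    assume ne: "j1 mod p \<noteq> j2 mod p"
    define d where "d = int j1 - int j2"
    have "of_int d * g = h2 - h1" using that(3) unfolding d_def by (simp add: algebra_simps)
    moreover have "h2 - h1 \<in> H" using sH that unfolding sgrp_def by (metis diff_conv_add_uminus)
    ultimately have dg: "of_int d * g \<in> H" by simp
    have "\<not> int p dvd d"
    proof
      assume "int p dvd d"
      hence "int j1 mod int p = int j2 mod int p" unfolding d_def by (simp add: mod_eq_dvd_iff)
      hence "int (j1 mod p) = int (j2 mod p)" by (simp add: zmod_int)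
      thus False using ne by simp
    qed
    moreover have "prime (int p)" using pprime by simp
    ultimately have "coprime (int p) d" by (simp add: prime_imp_coprime)
    hence "gcd d (int p) = 1" by (simp add: coprime_iff_gcd_eq_1 gcd.commute)
    then obtain u v where uv: "u * d + v * int p = 1" using bezout_int[of d "int p"] by metis
    have "(of_int (u * d + v * int p) :: 'a) = 1" using uv by simp
    hence "of_int u * of_int d = (1::'a)" using ofp by simp
    hence "g = (of_int u * of_int d) * g" by simp
    hence "g = of_int u * (of_int d * g)" by (simp only: mult.assoc)
    moreover have "of_int u * (of_int d * g) \<in> H" using sgrp_ofint[OF sH dg] .
    ultimately show False using g by metis
  qed
  define l where "l x = zeta p ^ (SOME j. \<exists>h\<in>H. x = h + of_nat j * g)" for x
  have rep: "\<exists>j. \<exists>h\<in>H. x = h + of_nat j * g" for x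
    using H'U unfolding H'_def by blast
  have lval: "l (h + of_nat j * g) = zeta p ^ j" if "h \<in> H" for h j
  proof -
    define j' where "j' = (SOME j'. \<exists>h'\<in>H. h + of_nat j * g = h' + of_nat j' * g)"
    have "\<exists>h'\<in>H. h + of_nat j * g = h' + of_nat j' * g"
      unfolding j'_def by (rule someI_ex) (use that in blast)
    then obtain h' where "h' \<in> H" "h + of_nat j * g = h' + of_nat j' * g" by blast
    hence "j mod p = j' mod p" using uniq that by blast
    hence "zeta p ^ j' = zeta p ^ j" using zeta_pow_mod[of p] p2 by (metis not_numeral_le_zero neq0_conv)
    thus ?thesis unfolding l_def j'_def[symmetric] by simp
  qed
  have "l \<in> achar" unfolding achar_def
  proof (intro CollectI conjI allI)
    fix x y
    obtain j1 h1 where x: "h1 \<in> H" "x = h1 + of_nat j1 * g" using rep by blast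
    obtain j2 h2 where y: "h2 \<in> H" "y = h2 + of_nat j2 * g" using rep by blast
    have xy: "x + y = (h1 + h2) + of_nat (j1 + j2) * g" using x y by (simp add: algebra_simps)
    have "h1 + h2 \<in> H" using sH x y unfolding sgrp_def by blast
    hence "l (x + y) = zeta p ^ (j1 + j2)" unfolding xy by (rule lval)
    moreover have "l x = zeta p ^ j1" unfolding x(2) by (rule lval[OF x(1)])
    moreover have "l y = zeta p ^ j2" unfolding y(2) by (rule lval[OF y(1)])
    ultimately show "l (x + y) = l x * l y" by (simp add: power_add)
  next
    fix x
    show "l x \<noteq> 0" unfolding l_def zeta_def by simp
  qed
  moreover have "l g = zeta p" using lval[of 0 1] sH unfolding sgrp_def by simp
  hence "l g \<noteq> 1" using zeta_ne_1 p2 by simp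
  ultimately show ?thesis by blast
qed

lemma achar_sep:
  assumes "(t::'a::{finite,field}) \<noteq> 0"
  shows "\<exists>mu\<in>achar. mu t \<noteq> 1"
proof -
  obtain l s where l: "l \<in> (achar :: ('a \<Rightarrow> complex) set)" "l s \<noteq> 1"
    using exists_nontriv_achar by blast
  define mu where "mu x = l (s * x / t)" for x
  have "mu \<in> achar" unfolding achar_def mu_def
    using l(1) by (auto simp: achar_add achar_nz distrib_left add_divide_distrib)
  moreover have "mu t = l s" unfolding mu_def using assms by simp
  ultimately show ?thesis using l by (intro bexI[of _ mu]) auto
qed

lemma achar_sum_gen:
  "(\<Sum>l\<in>achar. l (t::'a::{finite,field})) = (if t = 0 then of_nat (card (achar :: ('a \<Rightarrow> complex) set)) else 0)"
proof (cases "t = 0")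
  case True
  thus ?thesis by (simp add: achar_0)
next
  case False
  then obtain mu where mu: "mu \<in> achar" "mu t \<noteq> 1" using achar_sep by blast
  have "(\<Sum>l\<in>achar. mu t * l t) = (\<Sum>l\<in>achar. l t)"
  proof (rule sum.reindex_bij_witness[of _ "\<lambda>l x. l x / mu x" "\<lambda>l x. mu x * l x"])
    fix l assume l: "l \<in> (achar :: ('a \<Rightarrow> complex) set)"
    show "(\<lambda>x. l x / mu x) \<in> achar" unfolding achar_def using l mu
      by (auto simp: achar_add achar_nz)
    show "(\<lambda>x. mu x * (l x / mu x)) = l" using mu by (auto simp: achar_nz)
    show "(\<lambda>x. mu x * l x) \<in> achar" unfolding achar_def using l mu
      by (auto simp: achar_add achar_nz)
    show "(\<lambda>x. mu x * l x / mu x) = l" using mu by (auto simp: achar_nz)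
    show "mu t * l t = mu t * l t" by simp
  qed
  hence "mu t * (\<Sum>l\<in>achar. l t) = (\<Sum>l\<in>achar. l t)" by (simp add: sum_distrib_left)
  hence "(\<Sum>l\<in>achar. l t) = 0" using mu(2)
    by (metis mult_cancel_right2)
  thus ?thesis using False by simp
qed

lemma achar_sum_x:
  assumes l: "l \<in> (achar :: ('a::{finite,field} \<Rightarrow> complex) set)" and s: "l s \<noteq> 1"
  shows "(\<Sum>x\<in>UNIV. l x) = 0"
proof -
  have "(\<Sum>x\<in>UNIV. l s * l x) = (\<Sum>x\<in>UNIV. l x)"
    by (rule sum.reindex_bij_witness[of _ "\<lambda>x. x - s" "\<lambda>x. x + s"]) (auto simp: achar_add[OF l])
  hence "l s * (\<Sum>x\<in>UNIV. l x) = (\<Sum>x\<in>UNIV. l x)" by (simp add: sum_distrib_left)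
  thus ?thesis using s by (metis mult_cancel_right2)
qed

lemma card_achar: "card (achar :: ('a::{finite,field} \<Rightarrow> complex) set) = card (UNIV::'a set)"
proof -
  have "(\<Sum>x\<in>(UNIV::'a set). \<Sum>l\<in>achar. l x) = (\<Sum>l\<in>achar. \<Sum>x\<in>(UNIV::'a set). l x)"
    using sum.swap[where g="\<lambda>x l. l x" and A="UNIV :: 'a set" and B="achar :: ('a \<Rightarrow> complex) set"] by simp
  also have "(\<Sum>x\<in>(UNIV::'a set). \<Sum>l\<in>achar. l x) = of_nat (card (achar :: ('a \<Rightarrow> complex) set))"
    by (simp add: achar_sum_gen)
  also have "(\<Sum>l\<in>achar. \<Sum>x\<in>(UNIV::'a set). l x) = (\<Sum>l\<in>(achar::('a \<Rightarrow> complex) set). if l = (\<lambda>_. 1) then of_nat (card (UNIV::'a set)) else 0)"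
  proof (rule sum.cong)
    fix l assume l: "l \<in> (achar :: ('a \<Rightarrow> complex) set)"
    show "(\<Sum>x\<in>UNIV. l x) = (if l = (\<lambda>_. 1) then of_nat (card (UNIV::'a set)) else 0)"
    proof (cases "l = (\<lambda>_. 1)")
      case True thus ?thesis by simp
    next
      case False
      then obtain s where "l s \<noteq> 1" by auto
      thus ?thesis using achar_sum_x[OF l] False by simp
    qed
  qed simp
  also have "\<dots> = of_nat (card (UNIV::'a set))" using one_achar[where 'a='a] finite_achar[where 'a='a] by (simp add: sum.delta sum.delta')
  finally show ?thesis by (simp only: of_nat_eq_iff)
qed

lemma achar_sum:
  "(\<Sum>l\<in>achar. l (t::'a::{finite,field})) = (if t = 0 then of_nat (card (UNIV::'a set)) else 0)"
  using achar_sum_gen[of t] card_achar[where 'a='a] by simp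

lemma achar_sum_nontriv:
  "(\<Sum>l\<in>achar - {\<lambda>_. 1}. l (t::'a::{finite,field})) = (if t = 0 then of_nat (card (UNIV::'a set)) - 1 else - 1)"
proof -
  have "(\<Sum>l\<in>achar. l t) = (\<lambda>_. 1) t + (\<Sum>l\<in>achar - {\<lambda>_. 1}. l t)"
    using one_achar finite_achar by (rule sum.remove[rotated])
  hence "(\<Sum>l\<in>achar - {\<lambda>_. 1}. l t) = (\<Sum>l\<in>achar. l t) - 1" by simp
  thus ?thesis using achar_sum[of t] by simp
qed


lemma perm_inv_eq: "w permutes S \<Longrightarrow> w r = k \<Longrightarrow> inv w k = r"
  by (metis permutes_inverses(2))

lemma card_greater_perm:
  assumes w: "w permutes {1..N}"
  shows "card {r \<in> {1..N}. i < w r} = N - i"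
proof -
  have "w ` {r \<in> {1..N}. i < w r} = {k \<in> {1..N}. i < k}"
  proof
    show "w ` {r \<in> {1..N}. i < w r} \<subseteq> {k \<in> {1..N}. i < k}"
      using permutes_in_image[OF w] by auto
    show "{k \<in> {1..N}. i < k} \<subseteq> w ` {r \<in> {1..N}. i < w r}"
    proof
      fix k assume k: "k \<in> {k \<in> {1..N}. i < k}"
      have "w (inv w k) = k" by (rule permutes_inverses(1)[OF w])
      moreover have "inv w k \<in> {1..N}" using k permutes_in_image[OF permutes_inv[OF w]] by auto
      ultimately show "k \<in> w ` {r \<in> {1..N}. i < w r}" using k by (intro image_eqI[of _ _ "inv w k"]) auto
    qed
  qed
  moreover have "inj_on w {r \<in> {1..N}. i < w r}"
    using permutes_inj[OF w] by (auto intro: inj_on_subset)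
  ultimately have "card {r \<in> {1..N}. i < w r} = card {k \<in> {1..N}. i < k}"
    by (metis card_image)
  also have "{k \<in> {1..N}. i < k} = {Suc i..N}" by auto
  finally show ?thesis by simp
qed

lemma iota_le: 
  assumes w: "w permutes {1..N}"
  shows "iota N w i \<le> N - i"
proof -
  have "iota N w i \<le> card {r \<in> {1..N}. i < w r}"
    unfolding iota_def by (intro card_mono) auto
  thus ?thesis using card_greater_perm[OF w] by simp
qed

lemma swap_iota:
  assumes w: "w permutes {1..N}" and i: "i \<in> {1..N}" and lt: "iota N w i < N - i"
  shows "\<exists>v. v permutes {1..N} \<and> iota N v i = Suc (iota N w i) \<and>
             (\<forall>k\<in>{1..N}. k \<noteq> i \<longrightarrow> iota N v k = iota N w k)"
proof -
  define s where "s = inv w i"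
  have s: "s \<in> {1..N}" "w s = i"
    unfolding s_def using i permutes_in_image[OF permutes_inv[OF w]] permutes_inverses(1)[OF w] by auto
  define T where "T = {t \<in> {1..N}. s < t \<and> i < w t}"
  have "T \<noteq> {}"
  proof
    assume T: "T = {}"
    have "{r \<in> {1..N}. i < w r} \<subseteq> {r \<in> {1..N}. r < s \<and> i < w r}"
    proof
      fix r assume r: "r \<in> {r \<in> {1..N}. i < w r}"
      have "r \<noteq> s" using r s by auto
      moreover have "\<not> s < r" using r T unfolding T_def by auto
      ultimately show "r \<in> {r \<in> {1..N}. r < s \<and> i < w r}" using r by auto
    qed
    hence "card {r \<in> {1..N}. i < w r} \<le> iota N w i"
      unfolding iota_def s_def by (intro card_mono) auto
    thus False using card_greater_perm[OF w, of i] lt by simp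
  qed
  define t where "t = Min T"
  have fT: "finite T" unfolding T_def by auto
  have tT: "t \<in> T" unfolding t_def using fT \<open>T \<noteq> {}\<close> by (rule Min_in)
  have tmin: "\<And>r. r \<in> T \<Longrightarrow> t \<le> r" unfolding t_def using fT by simp
  have t: "t \<in> {1..N}" "s < t" "i < w t" using tT unfolding T_def by auto
  have between: "w r < i" if "s < r" "r < t" for r
  proof -
    have rN: "r \<in> {1..N}" using that s t by auto
    have "\<not> i < w r" using tmin[of r] that rN unfolding T_def by auto
    moreover have "w r \<noteq> i" using s that permutes_inj[OF w] by (metis inj_eq less_irrefl)
    ultimately show ?thesis by simp
  qed
  define v where "v = w \<circ> transpose s t"
  have v: "v permutes {1..N}" unfolding v_def
    by (rule permutes_compose[OF permutes_swap_id[OF s(1) t(1)] w])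
  have invv: "inv v k = transpose s t (inv w k)" for k
    by (rule perm_inv_eq[OF v]) (simp add: v_def permutes_inverses(1)[OF w] transpose_apply_commute)
  have invvi: "inv v i = t" unfolding invv s_def[symmetric] by simp
  have vr: "v r = w (transpose s t r)" for r unfolding v_def by simp
  have vi: "iota N v i = Suc (iota N w i)"
  proof -
    have "{r \<in> {1..N}. r < inv v i \<and> i < v r} = insert s {r \<in> {1..N}. r < inv w i \<and> i < w r}"
    proof (intro set_eqI iffI)
      fix r assume r: "r \<in> {r \<in> {1..N}. r < inv v i \<and> i < v r}"
      hence r': "r \<in> {1..N}" "r < t" "i < w (transpose s t r)"
        unfolding invvi vr s_def[symmetric] by auto
      show "r \<in> insert s {r \<in> {1..N}. r < inv w i \<and> i < w r}"
      proof (cases "r = s")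
        case False
        hence tr: "transpose s t r = r" using r' by auto
        have "\<not> (s < r)" using between[of r] r' tr by auto
        thus ?thesis using r' tr False unfolding s_def[symmetric] by auto
      qed simp
    next
      fix r assume r: "r \<in> insert s {r \<in> {1..N}. r < inv w i \<and> i < w r}"
      show "r \<in> {r \<in> {1..N}. r < inv v i \<and> i < v r}"
      proof (cases "r = s")
        case True thus ?thesis using s t unfolding invvi vr s_def[symmetric] by auto
      next
        case False
        hence "r < s" "r \<in> {1..N}" "i < w r" using r unfolding s_def[symmetric] by auto
        moreover hence "transpose s t r = r" using t by auto
        ultimately show ?thesis using t unfolding invvi vr s_def[symmetric] by auto
      qed
    qed
    moreover have "s \<notin> {r \<in> {1..N}. r < inv w i \<and> i < w r}" unfolding s_def by auto
    ultimately show ?thesis unfolding iota_def by simp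
  qed
  have vk: "iota N v k = iota N w k" if k: "k \<in> {1..N}" "k \<noteq> i" for k
  proof -
    define r0 where "r0 = inv w k"
    have r0: "r0 \<in> {1..N}" "w r0 = k"
      unfolding r0_def using k permutes_in_image[OF permutes_inv[OF w]] permutes_inverses(1)[OF w] by auto
    have r0s: "r0 \<noteq> s" using r0 s k by auto
    have SV: "iota N v k = card {r \<in> {1..N}. r < transpose s t r0 \<and> k < w (transpose s t r)}"
      unfolding iota_def invv vr r0_def by simp
    have SW: "iota N w k = card {r \<in> {1..N}. r < r0 \<and> k < w r}"
      unfolding iota_def r0_def by simp
    show ?thesis
    proof (cases "r0 < t")
      case True
      have "{r \<in> {1..N}. r < transpose s t r0 \<and> k < w (transpose s t r)} = {r \<in> {1..N}. r < r0 \<and> k < w r}"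
      proof (cases "r0 < s")
        case True
        hence "transpose s t r0 = r0" using r0s \<open>r0 < t\<close> by auto
        moreover have "r < r0 \<Longrightarrow> transpose s t r = r" for r using True t by auto
        ultimately show ?thesis by auto
      next
        case False
        hence sr0: "s < r0" using r0s by simp
        hence kl: "k < i" using between[OF sr0 \<open>r0 < t\<close>] r0 by simp
        have "transpose s t r0 = r0" using r0s \<open>r0 < t\<close> by auto
        moreover have "(k < w (transpose s t r)) = (k < w r)" if "r < r0" for r
          using that sr0 \<open>r0 < t\<close> kl s t by (cases "r = s") auto
        ultimately show ?thesis by auto
      qed
      thus ?thesis using SV SW by simp
    next
      case False
      show ?thesis
      proof (cases "r0 = t")
        case True
        hence kw: "i < k" using t r0 by simp
        have "{r \<in> {1..N}. r < transpose s t r0 \<and> k < w (transpose s t r)} = {r \<in> {1..N}. r < r0 \<and> k < w r}"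
        proof (intro set_eqI iffI)
          fix r assume "r \<in> {r \<in> {1..N}. r < transpose s t r0 \<and> k < w (transpose s t r)}"
          hence "r \<in> {1..N}" "r < s" "k < w (transpose s t r)" using True by auto
          moreover hence "transpose s t r = r" using t by auto
          ultimately show "r \<in> {r \<in> {1..N}. r < r0 \<and> k < w r}" using True t by auto
        next
          fix r assume r: "r \<in> {r \<in> {1..N}. r < r0 \<and> k < w r}"
          have "r < s"
          proof (rule ccontr)
            assume "\<not> r < s"
            moreover have "r \<noteq> s" using r s kw by auto
            ultimately have "s < r" by simp
            thus False using between[of r] r True kw by auto
          qed
          moreover hence "transpose s t r = r" using t by auto
          ultimately show "r \<in> {r \<in> {1..N}. r < transpose s t r0 \<and> k < w (transpose s t r)}"
            using r True by auto
        qed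
        thus ?thesis using SV SW by simp
      next
        case False
        hence tr0: "t < r0" using \<open>\<not> r0 < t\<close> by simp
        hence tr00: "transpose s t r0 = r0" using r0s by auto
        have "{r \<in> {1..N}. r < r0 \<and> k < w r} = transpose s t ` {r \<in> {1..N}. r < r0 \<and> k < w (transpose s t r)}"
        proof (intro set_eqI iffI)
          fix r assume r: "r \<in> {r \<in> {1..N}. r < r0 \<and> k < w r}"
          have "transpose s t r \<in> {1..N}" using r s t by (auto simp: transpose_def)
          moreover have "transpose s t r < r0" using r s t tr0 by (auto simp: transpose_def)
          ultimately have "transpose s t r \<in> {r \<in> {1..N}. r < r0 \<and> k < w (transpose s t r)}"
            using r by simp
          moreover have "r = transpose s t (transpose s t r)" by simp
          ultimately show "r \<in> transpose s t ` {r \<in> {1..N}. r < r0 \<and> k < w (transpose s t r)}"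
            by blast
        next
          fix r assume "r \<in> transpose s t ` {r \<in> {1..N}. r < r0 \<and> k < w (transpose s t r)}"
          then obtain r' where r': "r = transpose s t r'" "r' \<in> {1..N}" "r' < r0" "k < w r"
            by auto
          show "r \<in> {r \<in> {1..N}. r < r0 \<and> k < w r}" using r' s t tr0 by (auto simp: transpose_def)
        qed
        moreover have "inj_on (transpose s t) X" for X by (rule inj_on_inverseI[where g="transpose s t"]) simp
        ultimately have "card {r \<in> {1..N}. r < r0 \<and> k < w r} = card {r \<in> {1..N}. r < r0 \<and> k < w (transpose s t r)}"
          by (simp add: card_image)
        thus ?thesis using SV SW tr00 by simp
      qed
    qed
  qed
  show ?thesis using v vi vk by blast
qed


definition emat :: "nat \<Rightarrow> nat \<Rightarrow> 'a::zero \<Rightarrow> 'a mat" where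
  "emat i j t = (\<lambda>a b. if a = i \<and> b = j then t else 0)"

lemma finite_pos: "finite (pos N)"
proof -
  have "pos N \<subseteq> {1..N} \<times> {1..N}" unfolding pos_def by auto
  thus ?thesis by (rule finite_subset) auto
qed

lemma emat_ut: "p \<in> pos N \<Longrightarrow> emat (fst p) (snd p) t \<in> ut N"
  unfolding pos_def ut_def emat_def by auto

lemma madd_ut:
  assumes "x \<in> ut N" "y \<in> ut N" shows "madd x y \<in> (ut N :: 'a::monoid_add mat set)"
proof -
  have "x i j + y i j \<noteq> 0 \<Longrightarrow> x i j \<noteq> 0 \<or> y i j \<noteq> 0" for i j by auto
  thus ?thesis using assms unfolding ut_def madd_def by blast
qed

lemma zero_ut: "(\<lambda>a b. 0) \<in> ut N"
  unfolding ut_def by auto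

lemma irr_mult: "\<psi> \<in> irr_chars N \<Longrightarrow> x \<in> ut N \<Longrightarrow> y \<in> ut N \<Longrightarrow> \<psi> (madd x y) = \<psi> x * \<psi> y"
  unfolding irr_chars_def by blast

lemma irr_nz: "\<psi> \<in> irr_chars N \<Longrightarrow> x \<in> ut N \<Longrightarrow> \<psi> x \<noteq> 0"
  unfolding irr_chars_def by blast

lemma irr_out: "\<psi> \<in> irr_chars N \<Longrightarrow> x \<notin> ut N \<Longrightarrow> \<psi> x = 0"
  unfolding irr_chars_def by blast

lemma irr_zero: "\<psi> \<in> irr_chars N \<Longrightarrow> \<psi> (\<lambda>a b. 0) = 1"
proof -
  assume psi: "\<psi> \<in> irr_chars N"
  have "madd (\<lambda>a b. 0) (\<lambda>a b. 0) = (\<lambda>a b. 0 :: 'a)" unfolding madd_def by simp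
  hence "\<psi> (\<lambda>a b. 0) = \<psi> (\<lambda>a b. 0) * \<psi> (\<lambda>a b. 0)"
    using irr_mult[OF psi zero_ut zero_ut] by simp
  thus ?thesis using irr_nz[OF psi zero_ut] by simp
qed

lemma emat_zero: "emat i j 0 = (\<lambda>a b. 0)"
  unfolding emat_def by auto

lemma irr_prod:
  assumes psi: "\<psi> \<in> irr_chars N" and x: "x \<in> ut N"
  shows "\<psi> x = (\<Prod>p\<in>pos N. \<psi> (emat (fst p) (snd p) (x (fst p) (snd p))))"
proof -
  define restr where "restr S = (\<lambda>a b. if (a, b) \<in> S then x a b else 0)" for S
  have rut: "restr S \<in> ut N" for S
    using x unfolding ut_def restr_def by auto
  have gen: "S \<subseteq> pos N \<Longrightarrow> \<psi> (restr S) = (\<Prod>p\<in>S. \<psi> (emat (fst p) (snd p) (x (fst p) (snd p))))"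
    if "finite S" for S
    using that
  proof (induction S rule: finite_induct)
    case empty
    have "restr {} = (\<lambda>a b. 0)" unfolding restr_def by simp
    thus ?case using irr_zero[OF psi] by simp
  next
    case (insert p S)
    have "restr (insert p S) = madd (emat (fst p) (snd p) (x (fst p) (snd p))) (restr S)"
      using insert(2) unfolding restr_def madd_def emat_def by (auto simp: fun_eq_iff)
    hence "\<psi> (restr (insert p S)) = \<psi> (emat (fst p) (snd p) (x (fst p) (snd p))) * \<psi> (restr S)"
      using irr_mult[OF psi emat_ut rut] insert(4) by auto
    thus ?case using insert by simp
  qed
  have "restr (pos N) = x" using x unfolding restr_def ut_def pos_def by (auto simp: fun_eq_iff)
  thus ?thesis using gen[OF finite_pos[of N]] by simp
qed

definition chi_comp :: "nat \<Rightarrow> (('a::{finite,field}) mat \<Rightarrow> complex) \<Rightarrow> nat \<times> nat \<Rightarrow> 'a \<Rightarrow> complex" where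
  "chi_comp N \<psi> = (\<lambda>p\<in>pos N. \<lambda>t. \<psi> (emat (fst p) (snd p) t))"

definition chi_of :: "nat \<Rightarrow> (nat \<times> nat \<Rightarrow> ('a::{finite,field}) \<Rightarrow> complex) \<Rightarrow> 'a mat \<Rightarrow> complex" where
  "chi_of N L = (\<lambda>x. if x \<in> ut N then \<Prod>p\<in>pos N. L p (x (fst p) (snd p)) else 0)"

lemma emat_add: "emat i j (s + t :: 'a::monoid_add) = madd (emat i j s) (emat i j t)"
  unfolding emat_def madd_def by (intro ext) simp

lemma comp_achar:
  assumes psi: "\<psi> \<in> irr_chars N" and p: "p \<in> pos N"
  shows "chi_comp N \<psi> p \<in> achar"
proof -
  have "chi_comp N \<psi> p = (\<lambda>t. \<psi> (emat (fst p) (snd p) t))" unfolding chi_comp_def using p by simp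
  moreover have "(\<lambda>t. \<psi> (emat (fst p) (snd p) t)) \<in> achar"
    unfolding achar_def
  proof (intro CollectI conjI allI)
    fix s t
    show "\<psi> (emat (fst p) (snd p) (s + t)) = \<psi> (emat (fst p) (snd p) s) * \<psi> (emat (fst p) (snd p) t)"
      unfolding emat_add by (rule irr_mult[OF psi emat_ut[OF p] emat_ut[OF p]])
    show "\<psi> (emat (fst p) (snd p) s) \<noteq> 0" by (rule irr_nz[OF psi emat_ut[OF p]])
  qed
  ultimately show ?thesis by simp
qed

lemma comp_PiE: "\<psi> \<in> irr_chars N \<Longrightarrow> chi_comp N \<psi> \<in> PiE (pos N) (\<lambda>_. achar)"
  using comp_achar by (auto simp: chi_comp_def)

lemma chi_of_irr: "L \<in> PiE (pos N) (\<lambda>_. achar) \<Longrightarrow> chi_of N L \<in> irr_chars N"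
  unfolding irr_chars_def
proof (intro CollectI conjI ballI allI impI)
  assume L: "L \<in> PiE (pos N) (\<lambda>_. achar)"
  fix x y :: "'a mat" assume x: "x \<in> ut N" and y: "y \<in> ut N"
  show "chi_of N L (madd x y) = chi_of N L x * chi_of N L y"
  proof -
    have "(\<Prod>p\<in>pos N. L p (madd x y (fst p) (snd p))) = (\<Prod>p\<in>pos N. L p (x (fst p) (snd p)) * L p (y (fst p) (snd p)))"
    proof (rule prod.cong)
      fix p assume p: "p \<in> pos N"
      hence "L p \<in> achar" using L by (rule PiE_mem[rotated])
      thus "L p (madd x y (fst p) (snd p)) = L p (x (fst p) (snd p)) * L p (y (fst p) (snd p))"
        unfolding madd_def by (rule achar_add)
    qed simp
    thus ?thesis unfolding chi_of_def using x y madd_ut[OF x y] by (simp add: prod.distrib)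
  qed
next
  assume L: "L \<in> PiE (pos N) (\<lambda>_. achar)"
  fix x :: "'a mat" assume x: "x \<in> ut N"
  show "chi_of N L x \<noteq> 0"
  proof -
    have "\<forall>p\<in>pos N. L p (x (fst p) (snd p)) \<noteq> 0"
      using L by (metis PiE_mem achar_nz)
    thus ?thesis unfolding chi_of_def using x finite_pos[of N] by simp
  qed
next
  fix x :: "'a mat" assume "x \<notin> ut N"
  thus "chi_of N L x = 0" unfolding chi_of_def by simp
qed

lemma chi_of_comp: "\<psi> \<in> irr_chars N \<Longrightarrow> chi_of N (chi_comp N \<psi>) = \<psi>"
  by (auto simp: fun_eq_iff chi_of_def chi_comp_def irr_out irr_prod intro!: prod.cong)

lemma comp_chi_of:
  assumes L: "L \<in> PiE (pos N) (\<lambda>_. achar)"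
  shows "chi_comp N (chi_of N L) = L"
proof
  fix p
  show "chi_comp N (chi_of N L) p = L p"
  proof (cases "p \<in> pos N")
    case False thus ?thesis using L unfolding chi_comp_def by auto
  next
    case True
    show ?thesis
    proof
      fix t
      have "chi_comp N (chi_of N L) p t = (\<Prod>q\<in>pos N. L q (emat (fst p) (snd p) t (fst q) (snd q)))"
        unfolding chi_comp_def chi_of_def using True emat_ut[OF True, of t] by simp
      also have "\<dots> = L p (emat (fst p) (snd p) t (fst p) (snd p)) * (\<Prod>q\<in>pos N - {p}. L q (emat (fst p) (snd p) t (fst q) (snd q)))"
        by (rule prod.remove[OF finite_pos True])
      also have "(\<Prod>q\<in>pos N - {p}. L q (emat (fst p) (snd p) t (fst q) (snd q))) = 1"
      proof (rule prod.neutral, rule ballI)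
        fix q assume q: "q \<in> pos N - {p}"
        hence "emat (fst p) (snd p) t (fst q) (snd q) = 0" unfolding emat_def by (auto simp: prod_eq_iff)
        moreover have "L q \<in> achar" using L q by (metis PiE_mem DiffD1)
        ultimately show "L q (emat (fst p) (snd p) t (fst q) (snd q)) = 1" by (simp add: achar_0)
      qed
      finally show "chi_comp N (chi_of N L) p t = L p t" unfolding emat_def by simp
    qed
  qed
qed

lemma comp_apply: "p \<in> pos N \<Longrightarrow> chi_comp N \<psi> p t = \<psi> (emat (fst p) (snd p) t)"
  unfolding chi_comp_def by simp

lemma ker_iff:
  assumes psi: "\<psi> \<in> irr_chars N"
  shows "(ut_perm N v \<subseteq> ker_char N \<psi>) \<longleftrightarrow>
         (\<forall>p\<in>pos N. snd p - fst p \<le> iota N v (fst p) \<longrightarrow> chi_comp N \<psi> p = (\<lambda>_. 1))"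
proof
  assume H: "ut_perm N v \<subseteq> ker_char N \<psi>"
  show "\<forall>p\<in>pos N. snd p - fst p \<le> iota N v (fst p) \<longrightarrow> chi_comp N \<psi> p = (\<lambda>_. 1)"
  proof (intro ballI impI ext)
    fix p and t :: 'a assume p: "p \<in> pos N" and d: "snd p - fst p \<le> iota N v (fst p)"
    have "emat (fst p) (snd p) t \<in> ut_perm N v"
      unfolding ut_perm_def using emat_ut[OF p] p d by (auto simp: emat_def pos_def)
    hence "\<psi> (emat (fst p) (snd p) t) = 1" using H unfolding ker_char_def by auto
    thus "chi_comp N \<psi> p t = 1" using comp_apply[OF p, of \<psi> t] by simp
  qed
next
  assume H: "\<forall>p\<in>pos N. snd p - fst p \<le> iota N v (fst p) \<longrightarrow> chi_comp N \<psi> p = (\<lambda>_. 1)"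
  show "ut_perm N v \<subseteq> ker_char N \<psi>"
  proof
    fix x :: "'a mat" assume x: "x \<in> ut_perm N v"
    hence xu: "x \<in> ut N" unfolding ut_perm_def by simp
    have "\<psi> x = (\<Prod>p\<in>pos N. \<psi> (emat (fst p) (snd p) (x (fst p) (snd p))))" by (rule irr_prod[OF psi xu])
    also have "\<dots> = 1"
    proof (rule prod.neutral, rule ballI)
      fix p assume p: "p \<in> pos N"
      show "\<psi> (emat (fst p) (snd p) (x (fst p) (snd p))) = 1"
      proof (cases "x (fst p) (snd p) = 0")
        case True thus ?thesis by (simp add: emat_zero irr_zero[OF psi])
      next
        case False
        hence "snd p - fst p \<le> iota N v (fst p)" using x unfolding ut_perm_def by auto
        hence "chi_comp N \<psi> p = (\<lambda>_. 1)" using H p by blast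
        hence "chi_comp N \<psi> p (x (fst p) (snd p)) = 1" by simp
        thus ?thesis using comp_apply[OF p, of \<psi>] by simp
      qed
    qed
    finally show "x \<in> ker_char N \<psi>" unfolding ker_char_def using xu by simp
  qed
qed

definition allowed :: "nat \<Rightarrow> (nat \<Rightarrow> nat) \<Rightarrow> nat \<times> nat \<Rightarrow> ('a::{finite,field} \<Rightarrow> complex) set" where
  "allowed N w p = (if snd p - fst p \<le> iota N w (fst p) then {\<lambda>_. 1}
     else if snd p - fst p = Suc (iota N w (fst p)) then achar - {\<lambda>_. 1} else achar)"

lemma allowed_sub: "allowed N w p \<subseteq> achar"
  unfolding allowed_def using one_achar by auto

lemma largest_iff:
  assumes psi: "\<psi> \<in> irr_chars N" and w: "w permutes {1..N}"
  shows "largest_in_ker N w \<psi> \<longleftrightarrow> chi_comp N \<psi> \<in> PiE (pos N) (allowed N w)"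
proof -
  let ?c = "chi_comp N \<psi>"
  have cP: "?c \<in> PiE (pos N) (\<lambda>_. achar)" by (rule comp_PiE[OF psi])
  let ?A = "\<forall>p\<in>pos N. snd p - fst p \<le> iota N w (fst p) \<longrightarrow> ?c p = (\<lambda>_. 1)"
  let ?C = "\<forall>p\<in>pos N. snd p - fst p = Suc (iota N w (fst p)) \<longrightarrow> ?c p \<noteq> (\<lambda>_. 1)"
  have PA: "?c \<in> PiE (pos N) (allowed N w) \<longleftrightarrow> ?A \<and> ?C"
  proof
    assume "?c \<in> PiE (pos N) (allowed N w)"
    hence al: "?c p \<in> allowed N w p" if "p \<in> pos N" for p using that by (rule PiE_mem)
    show "?A \<and> ?C"
    proof (intro conjI ballI impI)
      fix p assume p: "p \<in> pos N" and d: "snd p - fst p \<le> iota N w (fst p)"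
      show "?c p = (\<lambda>_. 1)" using al[OF p] d unfolding allowed_def by simp
    next
      fix p assume p: "p \<in> pos N" and d: "snd p - fst p = Suc (iota N w (fst p))"
      show "?c p \<noteq> (\<lambda>_. 1)" using al[OF p] d unfolding allowed_def by simp
    qed
  next
    assume AC: "?A \<and> ?C"
    have "?c p \<in> allowed N w p" if p: "p \<in> pos N" for p
    proof -
      have "?c p \<in> achar" using cP p by (rule PiE_mem)
      thus ?thesis using AC p one_achar unfolding allowed_def by auto
    qed
    moreover have "?c p = undefined" if "p \<notin> pos N" for p using that unfolding chi_comp_def by simp
    ultimately show "?c \<in> PiE (pos N) (allowed N w)" unfolding PiE_def extensional_def by auto
  qed
  have L: "largest_in_ker N w \<psi> \<longleftrightarrow> ?A \<and>
     (\<forall>v. v permutes {1..N} \<and> (\<forall>p\<in>pos N. snd p - fst p \<le> iota N v (fst p) \<longrightarrow> ?c p = (\<lambda>_. 1))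
          \<longrightarrow> ut_perm N v \<subseteq> (ut_perm N w :: 'a mat set))"
    unfolding largest_in_ker_def ker_iff[OF psi] ..
  show ?thesis unfolding L PA
  proof (intro iffI conjI)
    assume H: "?A \<and> (\<forall>v. v permutes {1..N} \<and> (\<forall>p\<in>pos N. snd p - fst p \<le> iota N v (fst p) \<longrightarrow> ?c p = (\<lambda>_. 1))
          \<longrightarrow> ut_perm N v \<subseteq> (ut_perm N w :: 'a mat set))"
    thus "?A" by blast
    show "?C"
    proof (intro ballI impI notI)
      fix p assume p: "p \<in> pos N" and d: "snd p - fst p = Suc (iota N w (fst p))" and c1: "?c p = (\<lambda>_. 1)"
      obtain i j where ij: "p = (i, j)" by (cases p)
      have ij2: "1 \<le> i" "i < j" "j \<le> N" using p ij unfolding pos_def by auto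
      have "iota N w i < N - i" using d ij ij2 by simp
      then obtain v where v: "v permutes {1..N}" "iota N v i = Suc (iota N w i)"
        "\<forall>k\<in>{1..N}. k \<noteq> i \<longrightarrow> iota N v k = iota N w k"
        using swap_iota[OF w, of i] ij2 by auto
      have "\<forall>q\<in>pos N. snd q - fst q \<le> iota N v (fst q) \<longrightarrow> ?c q = (\<lambda>_. 1)"
      proof (intro ballI impI)
        fix q assume q: "q \<in> pos N" and dq: "snd q - fst q \<le> iota N v (fst q)"
        show "?c q = (\<lambda>_. 1)"
        proof (cases "fst q = i")
          case True
          show ?thesis
          proof (cases "snd q - fst q \<le> iota N w (fst q)")
            case True thus ?thesis using H q by blast
          next
            case False
            hence "snd q - fst q = Suc (iota N w i)" using dq v(2) \<open>fst q = i\<close> by simp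
            hence "q = p" using d ij \<open>fst q = i\<close> q ij2 unfolding pos_def by (cases q) auto
            thus ?thesis using c1 by simp
          qed
        next
          case False
          have "fst q \<in> {1..N}" using q unfolding pos_def by auto
          hence "iota N v (fst q) = iota N w (fst q)" using v(3) False by blast
          thus ?thesis using H q dq by auto
        qed
      qed
      hence sub: "ut_perm N v \<subseteq> (ut_perm N w :: 'a mat set)" using H v(1) by blast
      have "emat i j (1::'a) \<in> ut_perm N v"
        unfolding ut_perm_def using emat_ut[OF p] ij ij2 d v(2) by (auto simp: emat_def)
      moreover have "emat i j (1::'a) \<notin> ut_perm N w"
        unfolding ut_perm_def using ij d by (auto simp: emat_def)
      ultimately show False using sub by blast
    qed
  next
    assume AC: "?A \<and> ?C"
    thus "?A" by blast
    show "\<forall>v. v permutes {1..N} \<and> (\<forall>p\<in>pos N. snd p - fst p \<le> iota N v (fst p) \<longrightarrow> ?c p = (\<lambda>_. 1))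
          \<longrightarrow> ut_perm N v \<subseteq> (ut_perm N w :: 'a mat set)"
    proof (intro allI impI subsetI)
      fix v x
      assume Kv: "v permutes {1..N} \<and> (\<forall>p\<in>pos N. snd p - fst p \<le> iota N v (fst p) \<longrightarrow> ?c p = (\<lambda>_. 1))"
      assume x: "x \<in> (ut_perm N v :: 'a mat set)"
      have xu: "x \<in> ut N" using x unfolding ut_perm_def by simp
      have "j - i \<le> iota N w i" if nz: "x i j \<noteq> 0" for i j
      proof (rule ccontr)
        assume gt: "\<not> j - i \<le> iota N w i"
        have b: "1 \<le> i" "i < j" "j \<le> N" using xu nz unfolding ut_def by auto
        have dv: "j - i \<le> iota N v i" using x nz unfolding ut_perm_def by auto
        define j' where "j' = i + Suc (iota N w i)"
        have p': "(i, j') \<in> pos N" using b gt unfolding pos_def j'_def by auto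
        have "?c (i, j') = (\<lambda>_. 1)" using Kv p' dv gt unfolding j'_def by auto
        moreover have "?c (i, j') \<noteq> (\<lambda>_. 1)" using AC p' unfolding j'_def by auto
        ultimately show False by simp
      qed
      thus "x \<in> ut_perm N w" using x xu unfolding ut_perm_def by auto
    qed
  qed
qed

lemma finite_allowed: "finite (allowed N w p)"
  using finite_subset[OF allowed_sub finite_achar] .

lemma supchar_formula0:
  assumes w: "w permutes {1..N}"
  shows "supchar N w (x::('a::{finite,field}) mat) = (if x \<in> ut N then
     \<Prod>p\<in>pos N. (\<Sum>l\<in>allowed N w p. l (x (fst p) (snd p))) else 0)"
proof (cases "x \<in> ut N")
  case False
  thus ?thesis unfolding supchar_def by (intro trans[OF sum.neutral]) (auto simp: irr_out)
next
  case True
  let ?S = "{\<psi> \<in> irr_chars N. largest_in_ker N w \<psi>} :: ('a mat \<Rightarrow> complex) set"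
  have "supchar N w x = (\<Sum>L\<in>PiE (pos N) (allowed N w). \<Prod>p\<in>pos N. L p (x (fst p) (snd p)))"
    unfolding supchar_def
  proof (rule sum.reindex_bij_witness[of _ "chi_of N" "chi_comp N"])
    fix \<psi> assume psi: "\<psi> \<in> ?S"
    show "chi_of N (chi_comp N \<psi>) = \<psi>" using psi chi_of_comp by blast
    show "chi_comp N \<psi> \<in> PiE (pos N) (allowed N w)" using psi largest_iff[OF _ w] by blast
    have "(\<Prod>p\<in>pos N. chi_comp N \<psi> p (x (fst p) (snd p))) = (\<Prod>p\<in>pos N. \<psi> (emat (fst p) (snd p) (x (fst p) (snd p))))"
      by (rule prod.cong) (simp_all add: comp_apply)
    also have "\<dots> = \<psi> x" using irr_prod[of \<psi> N x] psi True by simp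
    finally show "(\<Prod>p\<in>pos N. chi_comp N \<psi> p (x (fst p) (snd p))) = char_degree \<psi> * \<psi> x"
      using psi irr_zero[of \<psi> N] unfolding char_degree_def by simp
  next
    fix L :: "nat \<times> nat \<Rightarrow> 'a \<Rightarrow> complex" assume L: "L \<in> PiE (pos N) (allowed N w)"
    hence L': "L \<in> PiE (pos N) (\<lambda>_. achar)" using PiE_mono[of "pos N" "allowed N w" "\<lambda>_. achar"] allowed_sub by blast
    show "chi_comp N (chi_of N L) = L" by (rule comp_chi_of[OF L'])
    show "chi_of N L \<in> ?S" using chi_of_irr[OF L'] largest_iff[OF chi_of_irr[OF L'] w] comp_chi_of[OF L'] L
      by simp
  qed
  also have "\<dots> = (\<Prod>p\<in>pos N. (\<Sum>l\<in>allowed N w p. l (x (fst p) (snd p))))"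
    by (rule prod_sum_PiE[symmetric]) (simp_all add: finite_pos finite_allowed)
  finally show ?thesis using True by simp
qed

definition gval :: "nat \<Rightarrow> nat \<Rightarrow> 'a::{finite,field} \<Rightarrow> complex" where
  "gval d io t = (if d \<le> io then 1 else if d = Suc io then
      (if t = 0 then of_nat (card (UNIV::'a set)) - 1 else - 1)
     else (if t = 0 then of_nat (card (UNIV::'a set)) else 0))"

lemma allowed_sum: "(\<Sum>l\<in>allowed N w p. l t) = gval (snd p - fst p) (iota N w (fst p)) t"
  unfolding allowed_def gval_def by (simp add: achar_sum achar_sum_nontriv)

lemma supchar_formula:
  assumes w: "w permutes {1..N}"
  shows "supchar N w (x::('a::{finite,field}) mat) = (if x \<in> ut N then
     \<Prod>p\<in>pos N. gval (snd p - fst p) (iota N w (fst p)) (x (fst p) (snd p)) else 0)"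
  unfolding supchar_formula0[OF w] allowed_sum ..


definition beta :: "nat \<Rightarrow> nat set \<Rightarrow> nat \<Rightarrow> nat" where
  "beta N A i = card {b \<in> {1..N}. b \<notin> A \<and> i < b}"

definition rNA :: "nat set \<Rightarrow> nat \<Rightarrow> nat" where
  "rNA A v = v - card {a \<in> A. a < v}"

definition rA :: "nat set \<Rightarrow> nat \<Rightarrow> nat" where
  "rA A v = v - card {b \<in> {1..<v}. b \<notin> A}"

lemma cA_beta:
  assumes A: "A \<subseteq> {1..N}" and i: "i \<le> N"
  shows "cA N A i = i + beta N A i"
proof -
  have "{b \<in> {1..N}. i < b} = {b \<in> {1..N}. b \<notin> A \<and> i < b} \<union> {a \<in> A. a > i}" using A by auto
  moreover have "card ({b \<in> {1..N}. b \<notin> A \<and> i < b} \<union> {a \<in> A. a > i}) =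
     card {b \<in> {1..N}. b \<notin> A \<and> i < b} + card {a \<in> A. a > i}"
    using finite_subset[OF A] by (intro card_Un_disjoint) auto
  ultimately have "card {b \<in> {1..N}. i < b} = beta N A i + card {a \<in> A. a > i}"
    unfolding beta_def by simp
  moreover have "{b \<in> {1..N}. i < b} = {Suc i..N}" by auto
  ultimately have "N - i = beta N A i + card {a \<in> A. a > i}" by simp
  thus ?thesis unfolding cA_def using i by simp
qed

lemma rNA_card:
  assumes A: "A \<subseteq> {1..N}" and v: "v \<notin> A"
  shows "rNA A v = card {b \<in> {1..v}. b \<notin> A}"
proof -
  have e: "{1..v} = {b \<in> {1..v}. b \<notin> A} \<union> {a \<in> A. a < v}" using A v by (auto simp: order.order_iff_strict)
  have "card ({b \<in> {1..v}. b \<notin> A} \<union> {a \<in> A. a < v}) = card {b \<in> {1..v}. b \<notin> A} + card {a \<in> A. a < v}"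
    by (intro card_Un_disjoint) auto
  hence "v = card {b \<in> {1..v}. b \<notin> A} + card {a \<in> A. a < v}" using e by (metis card_atLeastAtMost diff_Suc_1)
  thus ?thesis unfolding rNA_def by simp
qed

lemma rA_card:
  assumes A: "A \<subseteq> {1..N}" and v: "v \<in> A"
  shows "rA A v = card {a \<in> A. a \<le> v}"
proof -
  have e: "{1..v} = {b \<in> {1..<v}. b \<notin> A} \<union> {a \<in> A. a \<le> v}" using A v by (auto simp: le_less)
  have "card ({b \<in> {1..<v}. b \<notin> A} \<union> {a \<in> A. a \<le> v}) = card {b \<in> {1..<v}. b \<notin> A} + card {a \<in> A. a \<le> v}"
    by (intro card_Un_disjoint) auto
  hence "v = card {b \<in> {1..<v}. b \<notin> A} + card {a \<in> A. a \<le> v}" using e by (metis card_atLeastAtMost diff_Suc_1)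
  thus ?thesis unfolding rA_def by simp
qed

lemma rNA_mono:
  assumes A: "A \<subseteq> {1..N}" and u: "u \<notin> A" and v: "v \<notin> A" and uv: "u < v" and u1: "1 \<le> u"
  shows "rNA A u < rNA A v"
proof -
  have "v \<in> {b \<in> {1..v}. b \<notin> A}" "v \<notin> {b \<in> {1..u}. b \<notin> A}" using uv v u1 by auto
  moreover have "{b \<in> {1..u}. b \<notin> A} \<subseteq> {b \<in> {1..v}. b \<notin> A}" using uv by auto
  ultimately have "{b \<in> {1..u}. b \<notin> A} \<subset> {b \<in> {1..v}. b \<notin> A}" by blast
  hence "card {b \<in> {1..u}. b \<notin> A} < card {b \<in> {1..v}. b \<notin> A}" by (intro psubset_card_mono) auto
  thus ?thesis using rNA_card[OF A u] rNA_card[OF A v] by simp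
qed

lemma rA_mono:
  assumes A: "A \<subseteq> {1..N}" and u: "u \<in> A" and v: "v \<in> A" and uv: "u < v"
  shows "rA A u < rA A v"
proof -
  have "v \<in> {a \<in> A. a \<le> v}" "v \<notin> {a \<in> A. a \<le> u}" using uv v by auto
  moreover have "{a \<in> A. a \<le> u} \<subseteq> {a \<in> A. a \<le> v}" using uv by auto
  ultimately have "{a \<in> A. a \<le> u} \<subset> {a \<in> A. a \<le> v}" by blast
  moreover have "finite {a \<in> A. a \<le> v}" by simp
  ultimately have "card {a \<in> A. a \<le> u} < card {a \<in> A. a \<le> v}" by (intro psubset_card_mono) auto
  thus ?thesis using rA_card[OF A u] rA_card[OF A v] by simp
qed

lemma rNA_mono_iff:
  assumes A: "A \<subseteq> {1..N}" and u: "u \<notin> A" "1 \<le> u" and v: "v \<notin> A" "1 \<le> v"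
  shows "rNA A u < rNA A v \<longleftrightarrow> u < v"
  using rNA_mono[OF A u(1) v(1) _ u(2)] rNA_mono[OF A v(1) u(1) _ v(2)]
  by (metis less_asym linorder_neqE_nat)

lemma rA_mono_iff:
  assumes A: "A \<subseteq> {1..N}" and u: "u \<in> A" and v: "v \<in> A"
  shows "rA A u < rA A v \<longleftrightarrow> u < v"
  using rA_mono[OF A u v] rA_mono[OF A v u] by (metis less_asym linorder_neqE_nat)

lemma card_compl: "A \<subseteq> {1..N} \<Longrightarrow> card ({1..N} - A) = N - card A"
  by (simp add: card_Diff_subset finite_subset)

lemma rNA_bij:
  assumes A: "A \<subseteq> {1..N}"
  shows "bij_betw (rNA A) ({1..N} - A) {1..N - card A}"
proof -
  have inj: "inj_on (rNA A) ({1..N} - A)"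
  proof (rule inj_onI)
    fix x y assume x: "x \<in> {1..N} - A" and y: "y \<in> {1..N} - A" and e: "rNA A x = rNA A y"
    show "x = y"
    proof (rule linorder_cases[of x y])
      assume "x < y" thus ?thesis using rNA_mono[OF A, of x y] x y e by auto
    next
      assume "y < x" thus ?thesis using rNA_mono[OF A, of y x] x y e by auto
    qed
  qed
  have sub: "rNA A ` ({1..N} - A) \<subseteq> {1..N - card A}"
  proof
    fix y assume "y \<in> rNA A ` ({1..N} - A)"
    then obtain v where v: "v \<in> {1..N} - A" "y = rNA A v" by blast
    have y: "y = card {b \<in> {1..v}. b \<notin> A}" using rNA_card[OF A] v by simp
    have "v \<in> {b \<in> {1..v}. b \<notin> A}" using v by auto
    hence "0 < y" unfolding y by (subst card_gt_0_iff) auto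
    hence "1 \<le> y" by simp
    moreover have "y \<le> card ({1..N} - A)" unfolding y using v by (intro card_mono) auto
    ultimately show "y \<in> {1..N - card A}" using card_compl[OF A] by simp
  qed
  have "card (rNA A ` ({1..N} - A)) = card {1..N - card A}"
    using card_image[OF inj] card_compl[OF A] by simp
  hence "rNA A ` ({1..N} - A) = {1..N - card A}" using sub by (intro card_subset_eq) auto
  thus ?thesis using inj unfolding bij_betw_def by blast
qed

lemma rA_bij:
  assumes A: "A \<subseteq> {1..N}"
  shows "bij_betw (rA A) A {1..card A}"
proof -
  have fA: "finite A" using A finite_subset by blast
  have inj: "inj_on (rA A) A"
  proof (rule inj_onI)
    fix x y assume x: "x \<in> A" and y: "y \<in> A" and e: "rA A x = rA A y"
    show "x = y"
    proof (rule linorder_cases[of x y])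
      assume "x < y" thus ?thesis using rA_mono[OF A, of x y] x y e by auto
    next
      assume "y < x" thus ?thesis using rA_mono[OF A, of y x] x y e by auto
    qed
  qed
  have sub: "rA A ` A \<subseteq> {1..card A}"
  proof
    fix y assume "y \<in> rA A ` A"
    then obtain v where v: "v \<in> A" "y = rA A v" by blast
    have y: "y = card {a \<in> A. a \<le> v}" using rA_card[OF A] v by simp
    have "v \<in> {a \<in> A. a \<le> v}" using v by auto
    hence "0 < y" unfolding y using fA by (subst card_gt_0_iff) auto
    hence "1 \<le> y" by simp
    moreover have "y \<le> card A" unfolding y using fA by (intro card_mono) auto
    ultimately show "y \<in> {1..card A}" by simp
  qed
  have "card (rA A ` A) = card {1..card A}" using card_image[OF inj] by simp
  hence "rA A ` A = {1..card A}" using sub by (intro card_subset_eq) auto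
  thus ?thesis using inj unfolding bij_betw_def by blast
qed

lemma inv_in:
  assumes w: "w permutes {1..N}" and v: "v \<in> {1..N}"
  shows "inv w v \<in> {1..N}" "w (inv w v) = v"
  using v permutes_in_image[OF permutes_inv[OF w]] permutes_inverses(1)[OF w] by auto

lemma perm_in: "w permutes {1..N} \<Longrightarrow> r \<in> {1..N} \<Longrightarrow> w r \<in> {1..N}"
  by (rule permutes_in_image[THEN iffD2])

lemma beta_pos:
  assumes w: "w permutes {1..N}"
  shows "beta N A v = card {r \<in> {1..N}. w r \<notin> A \<and> v < w r}"
proof -
  have "w ` {r \<in> {1..N}. w r \<notin> A \<and> v < w r} = {b \<in> {1..N}. b \<notin> A \<and> v < b}"
  proof
    show "w ` {r \<in> {1..N}. w r \<notin> A \<and> v < w r} \<subseteq> {b \<in> {1..N}. b \<notin> A \<and> v < b}"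
      using perm_in[OF w] by auto
    show "{b \<in> {1..N}. b \<notin> A \<and> v < b} \<subseteq> w ` {r \<in> {1..N}. w r \<notin> A \<and> v < w r}"
    proof
      fix b assume b: "b \<in> {b \<in> {1..N}. b \<notin> A \<and> v < b}"
      hence "inv w b \<in> {r \<in> {1..N}. w r \<notin> A \<and> v < w r}" "w (inv w b) = b" using inv_in[OF w, of b] by auto
      thus "b \<in> w ` {r \<in> {1..N}. w r \<notin> A \<and> v < w r}" by (intro rev_image_eqI[of "inv w b"]) simp_all
    qed
  qed
  moreover have "card (w ` {r \<in> {1..N}. w r \<notin> A \<and> v < w r}) = card {r \<in> {1..N}. w r \<notin> A \<and> v < w r}"
    by (rule card_image, rule inj_on_subset[OF permutes_inj[OF w]]) simp
  ultimately show ?thesis unfolding beta_def by simp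
qed

lemma upclosed:
  assumes P: "P \<subseteq> {1..m + n}" and c: "card P = n"
    and up: "\<And>s t. s \<in> P \<Longrightarrow> t \<in> {1..m + n} \<Longrightarrow> s < t \<Longrightarrow> t \<in> P"
  shows "P = {m + 1..m + n}"
proof (cases "P = {}")
  case True
  hence "n = 0" using c by simp
  thus ?thesis using True by simp
next
  case False
  have fP: "finite P" using P finite_subset by blast
  define s0 where "s0 = Min P"
  have s0: "s0 \<in> P" unfolding s0_def using fP False by (rule Min_in)
  have s0le: "\<And>s. s \<in> P \<Longrightarrow> s0 \<le> s" unfolding s0_def using fP by simp
  have "P = {s0..m + n}"
  proof
    show "P \<subseteq> {s0..m + n}" using s0le P by auto
    show "{s0..m + n} \<subseteq> P"
    proof
      fix t assume t: "t \<in> {s0..m + n}"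
      show "t \<in> P"
      proof (cases "t = s0")
        case True thus ?thesis using s0 by simp
      next
        case False
        hence "s0 < t" using t by auto
        moreover have "t \<in> {1..m+n}" using t s0 P by auto
        ultimately show ?thesis using up[OF s0] by blast
      qed
    qed
  qed
  note Pe = this
  hence "card {s0..m+n} = n" using c by simp
  moreover have "s0 \<le> m + n" using s0 P by auto
  ultimately have "s0 = m + 1" by simp
  thus ?thesis using Pe by simp
qed

locale cfg =
  fixes m n :: nat and A :: "nat set" and w :: "nat \<Rightarrow> nat"
  assumes A: "A \<subseteq> {1..m+n}" and cA: "card A = n" and w: "w permutes {1..m+n}"
begin

abbreviation "NN \<equiv> m + n"

lemma injw: "inj_on w X"
  by (rule inj_on_subset[OF permutes_inj[OF w]]) simp

lemma cardP: "card {s \<in> {1..NN}. w s \<in> A} = n"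
proof -
  have "w ` {s \<in> {1..NN}. w s \<in> A} = A"
  proof
    show "w ` {s \<in> {1..NN}. w s \<in> A} \<subseteq> A" by auto
    show "A \<subseteq> w ` {s \<in> {1..NN}. w s \<in> A}"
    proof
      fix a assume a: "a \<in> A"
      hence "a \<in> {1..NN}" using A by auto
      hence "inv w a \<in> {s \<in> {1..NN}. w s \<in> A}" "w (inv w a) = a" using inv_in[OF w] a by auto
      thus "a \<in> w ` {s \<in> {1..NN}. w s \<in> A}" by (intro rev_image_eqI[of "inv w a"]) simp_all
    qed
  qed
  hence "card (w ` {s \<in> {1..NN}. w s \<in> A}) = n" using cA by simp
  thus ?thesis using card_image[OF injw] by simp
qed

definition "HH \<longleftrightarrow> {s \<in> {1..NN}. w s \<in> A} = {m+1..NN}"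

lemma H_pos:
  assumes H: HH and s: "s \<in> {1..NN}" shows "w s \<in> A \<longleftrightarrow> m < s"
proof -
  have e: "{s \<in> {1..NN}. w s \<in> A} = {m+1..NN}" using H unfolding HH_def .
  have "(s \<in> {s \<in> {1..NN}. w s \<in> A}) = (s \<in> {m+1..NN})" by (simp only: e)
  thus ?thesis using s by auto
qed

lemma beta_H: "HH \<Longrightarrow> beta NN A v = card {r \<in> {1..m}. v < w r}"
proof -
  assume H: HH
  have "{r \<in> {1..NN}. w r \<notin> A \<and> v < w r} = {r \<in> {1..m}. v < w r}"
    using H_pos[OF H] by auto
  thus ?thesis using beta_pos[OF w] by simp
qed

lemma bound_A: "HH \<Longrightarrow> i \<in> A \<Longrightarrow> beta NN A i \<le> iota NN w i"
proof -
  assume H: HH and i: "i \<in> A"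
  have iN: "i \<in> {1..NN}" using i A by auto
  have s: "inv w i \<in> {1..NN}" "w (inv w i) = i" using inv_in[OF w iN] by auto
  hence "m < inv w i" using H_pos[OF H s(1)] i by simp
  hence "{r \<in> {1..m}. i < w r} \<subseteq> {r \<in> {1..NN}. r < inv w i \<and> i < w r}" by auto
  hence "card {r \<in> {1..m}. i < w r} \<le> iota NN w i" unfolding iota_def by (intro card_mono) auto
  thus ?thesis using beta_H[OF H] by simp
qed

lemma bound_NA: "HH \<Longrightarrow> i \<in> {1..NN} - A \<Longrightarrow> iota NN w i \<le> beta NN A i"
proof -
  assume H: HH and i: "i \<in> {1..NN} - A"
  have s: "inv w i \<in> {1..NN}" "w (inv w i) = i" using inv_in[OF w] i by auto
  hence "\<not> m < inv w i" using H_pos[OF H s(1)] i by simp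
  hence "{r \<in> {1..NN}. r < inv w i \<and> i < w r} \<subseteq> {r \<in> {1..m}. i < w r}" by auto
  hence "iota NN w i \<le> card {r \<in> {1..m}. i < w r}" unfolding iota_def by (intro card_mono) auto
  thus ?thesis using beta_H[OF H] by simp
qed

lemma conv:
  assumes asmA: "\<forall>i\<in>A. beta NN A i \<le> iota NN w i"
      and asmN: "\<forall>i\<in>{1..NN} - A. iota NN w i \<le> beta NN A i"
  shows HH
proof (rule ccontr)
  assume nH: "\<not> HH"
  have "\<exists>s t. s \<in> {1..NN} \<and> t \<in> {1..NN} \<and> s < t \<and> w s \<in> A \<and> w t \<notin> A"
  proof (rule ccontr)
    assume ne: "\<not> (\<exists>s t. s \<in> {1..NN} \<and> t \<in> {1..NN} \<and> s < t \<and> w s \<in> A \<and> w t \<notin> A)"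
    have "{s \<in> {1..NN}. w s \<in> A} = {m+1..NN}"
    proof (rule upclosed[OF _ cardP])
      show "{s \<in> {1..NN}. w s \<in> A} \<subseteq> {1..NN}" by auto
      fix s t assume "s \<in> {s \<in> {1..NN}. w s \<in> A}" "t \<in> {1..NN}" "s < t"
      thus "t \<in> {s \<in> {1..NN}. w s \<in> A}" using ne by blast
    qed
    thus False using nH unfolding HH_def by simp
  qed
  then obtain s t where st: "s \<in> {1..NN}" "t \<in> {1..NN}" "s < t" "w s \<in> A" "w t \<notin> A" by blast
  define T0 where "T0 = {t \<in> {1..NN}. w t \<notin> A}"
  have fT0: "finite T0" unfolding T0_def by simp
  have tT0: "t \<in> T0" using st unfolding T0_def by simp
  define tb where "tb = Max T0"
  have tb: "tb \<in> T0" unfolding tb_def using fT0 tT0 by (intro Max_in) auto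
  have tbmax: "\<And>r. r \<in> T0 \<Longrightarrow> r \<le> tb" unfolding tb_def using fT0 by simp
  define b where "b = w tb"
  have tbN: "tb \<in> {1..NN}" "b \<notin> A" using tb unfolding T0_def b_def by auto
  have invb: "inv w b = tb" unfolding b_def by (rule perm_inv_eq[OF w]) simp
  define X where "X = {r \<in> {1..NN}. r < tb \<and> b < w r}"
  define B where "B v = {r \<in> {1..NN}. w r \<notin> A \<and> v < w r}" for v
  have iotab: "iota NN w b = card X" unfolding iota_def X_def invb ..
  have betab: "beta NN A b = card (B b)" unfolding B_def by (rule beta_pos[OF w])
  have BX: "B b \<subseteq> X"
  proof
    fix r assume r: "r \<in> B b"
    hence "r \<in> T0" unfolding B_def T0_def by auto
    hence "r \<le> tb" by (rule tbmax)
    moreover have "r \<noteq> tb" using r unfolding B_def b_def by auto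
    ultimately show "r \<in> X" using r unfolding X_def B_def by auto
  qed
  have bN: "b \<in> {1..NN}" unfolding b_def by (rule perm_in[OF w tbN(1)])
  have "iota NN w b \<le> beta NN A b" using asmN bN tbN(2) by blast
  hence "card X \<le> card (B b)" using iotab betab by simp
  moreover have "card (B b) \<le> card X" using BX by (intro card_mono) (auto simp: X_def)
  ultimately have XB: "B b = X" using BX by (intro card_subset_eq) (auto simp: X_def)
  have star: "w r \<le> b" if r: "r \<in> {1..NN}" "r < tb" "w r \<in> A" for r
  proof (rule ccontr)
    assume "\<not> w r \<le> b"
    hence "r \<in> X" using r unfolding X_def by auto
    hence "r \<in> B b" using XB by simp
    thus False using r unfolding B_def by auto
  qed
  define SA where "SA = {r \<in> {1..NN}. r < tb \<and> w r \<in> A}"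
  have "t \<le> tb" using tbmax[OF tT0] .
  hence sSA: "s \<in> SA" using st unfolding SA_def by auto
  have fSA: "finite (w ` SA)" unfolding SA_def by simp
  define a where "a = Max (w ` SA)"
  have "a \<in> w ` SA" unfolding a_def using fSA sSA by (intro Max_in) auto
  then obtain sa where sa: "sa \<in> SA" "w sa = a" by blast
  have amax: "w r \<le> a" if "r \<in> SA" for r unfolding a_def using fSA that by simp
  have saN: "sa \<in> {1..NN}" "sa < tb" "a \<in> A" using sa unfolding SA_def by auto
  have ab: "a < b" using star[OF saN(1) saN(2)] sa(2) saN(3) tbN(2) by (cases "a = b") auto
  have inva: "inv w a = sa" by (rule perm_inv_eq[OF w sa(2)])
  define Y where "Y = {r \<in> {1..NN}. r < sa \<and> a < w r}"
  have iotaa: "iota NN w a = card Y" unfolding iota_def Y_def inva ..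
  have betaa: "beta NN A a = card (B a)" unfolding B_def by (rule beta_pos[OF w])
  have YB: "Y \<subseteq> B a - {tb}"
  proof
    fix r assume r: "r \<in> Y"
    have "w r \<notin> A"
    proof
      assume "w r \<in> A"
      hence "r \<in> SA" using r saN unfolding Y_def SA_def by auto
      hence "w r \<le> a" by (rule amax)
      thus False using r unfolding Y_def by simp
    qed
    thus "r \<in> B a - {tb}" using r saN unfolding Y_def B_def by auto
  qed
  have "tb \<in> B a" using tbN ab unfolding B_def b_def by auto
  hence "card (B a - {tb}) < card (B a)" by (intro card_Diff1_less) (auto simp: B_def)
  moreover have "card Y \<le> card (B a - {tb})" using YB by (intro card_mono) (auto simp: B_def)
  ultimately have "iota NN w a < beta NN A a" using iotaa betaa by simp
  thus False using asmA saN(3) by force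
qed

lemma w_img_m: "HH \<Longrightarrow> w ` {1..m} = {1..NN} - A"
proof -
  assume H: HH
  show ?thesis
  proof
    show "w ` {1..m} \<subseteq> {1..NN} - A"
    proof
      fix y assume "y \<in> w ` {1..m}"
      then obtain r where r: "r \<in> {1..m}" "y = w r" by blast
      hence "r \<in> {1..NN}" by auto
      thus "y \<in> {1..NN} - A" using H_pos[OF H] perm_in[OF w] r by auto
    qed
    show "{1..NN} - A \<subseteq> w ` {1..m}"
    proof
      fix b assume b: "b \<in> {1..NN} - A"
      hence r: "inv w b \<in> {1..NN}" "w (inv w b) = b" using inv_in[OF w] by auto
      hence "inv w b \<in> {1..m}" using H_pos[OF H r(1)] b by auto
      thus "b \<in> w ` {1..m}" using r(2) by (intro rev_image_eqI[of "inv w b"]) simp_all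
    qed
  qed
qed

lemma w_img_hi: "HH \<Longrightarrow> w ` {m+1..NN} = A"
proof -
  assume H: HH
  show ?thesis
  proof
    show "w ` {m+1..NN} \<subseteq> A"
    proof
      fix y assume "y \<in> w ` {m+1..NN}"
      then obtain r where r: "r \<in> {m+1..NN}" "y = w r" by blast
      hence "r \<in> {1..NN}" by auto
      thus "y \<in> A" using H_pos[OF H] r by auto
    qed
    show "A \<subseteq> w ` {m+1..NN}"
    proof
      fix b assume b: "b \<in> A"
      hence "b \<in> {1..NN}" using A by auto
      hence r: "inv w b \<in> {1..NN}" "w (inv w b) = b" using inv_in[OF w] by auto
      hence "inv w b \<in> {m+1..NN}" using H_pos[OF H r(1)] b by auto
      thus "b \<in> w ` {m+1..NN}" using r(2) by (intro rev_image_eqI[of "inv w b"]) simp_all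
    qed
  qed
qed

lemma std_le_val:
  assumes H: HH and i: "i \<in> {1..m}"
  shows "std_le m n w i = rNA A (w i)"
proof -
  have "w ` {j \<in> {m+1..NN}. w j < w i} = {a \<in> A. a < w i}"
    using w_img_hi[OF H] by blast
  hence "card {j \<in> {m+1..NN}. w j < w i} = card {a \<in> A. a < w i}"
    using card_image[OF injw, of "{j \<in> {m+1..NN}. w j < w i}"] by simp
  thus ?thesis unfolding std_le_def rNA_def using i by simp
qed

lemma NNm: "NN - card A = m" using cA by simp

lemma std_le_perm:
  assumes H: HH
  shows "std_le m n w permutes {1..m}"
proof (rule bij_imp_permutes)
  have b1: "bij_betw w {1..m} ({1..NN} - A)" using w_img_m[OF H] injw unfolding bij_betw_def by blast
  have "bij_betw (rNA A \<circ> w) {1..m} {1..m}"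
    using bij_betw_trans[OF b1 rNA_bij[OF A]] NNm by simp
  thus "bij_betw (std_le m n w) {1..m} {1..m}"
    by (rule bij_betw_cong[THEN iffD1, rotated]) (simp add: std_le_val[OF H])
  show "\<And>x. x \<notin> {1..m} \<Longrightarrow> std_le m n w x = x" by (simp add: std_le_def del: atLeastAtMost_iff)
qed

lemma std_le_iota:
  assumes H: HH and i: "i \<in> {1..NN} - A"
  shows "iota m (std_le m n w) (rNA A i) = iota NN w i"
proof -
  let ?w1 = "std_le m n w"
  define s where "s = inv w i"
  have s: "s \<in> {1..NN}" "w s = i" using inv_in[OF w] i unfolding s_def by auto
  hence sm: "s \<in> {1..m}" using H_pos[OF H s(1)] i by auto
  have "?w1 s = rNA A i" using std_le_val[OF H sm] s by simp
  hence inv1: "inv ?w1 (rNA A i) = s" by (rule perm_inv_eq[OF std_le_perm[OF H]])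
  have "{r \<in> {1..m}. r < s \<and> rNA A i < ?w1 r} = {r \<in> {1..NN}. r < s \<and> i < w r}"
  proof (intro set_eqI iffI)
    fix r assume r: "r \<in> {r \<in> {1..m}. r < s \<and> rNA A i < ?w1 r}"
    hence rm: "r \<in> {1..m}" by simp
    hence "w r \<in> {1..NN} - A" using w_img_m[OF H] by blast
    hence "i < w r" using r std_le_val[OF H rm] rNA_mono_iff[OF A, of i "w r"] i by auto
    thus "r \<in> {r \<in> {1..NN}. r < s \<and> i < w r}" using r by auto
  next
    fix r assume r: "r \<in> {r \<in> {1..NN}. r < s \<and> i < w r}"
    hence rm: "r \<in> {1..m}" using sm by auto
    hence "w r \<in> {1..NN} - A" using w_img_m[OF H] by blast
    hence "rNA A i < ?w1 r" using r std_le_val[OF H rm] rNA_mono_iff[OF A, of i "w r"] i by auto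
    thus "r \<in> {r \<in> {1..m}. r < s \<and> rNA A i < ?w1 r}" using r rm by auto
  qed
  thus ?thesis unfolding iota_def inv1 s_def[symmetric] by simp
qed

lemma std_gt_val:
  assumes H: HH and j: "j \<in> {1..n}"
  shows "std_gt m n w j = rA A (w (j + m))"
proof -
  have jm: "j + m \<in> {1..NN}" using j by auto
  hence v: "w (j + m) \<in> {1..NN}" by (rule perm_in[OF w])
  have "w ` {i \<in> {1..m}. w i < w (j + m)} = {b \<in> {1..<w (j + m)}. b \<notin> A}"
  proof
    show "w ` {i \<in> {1..m}. w i < w (j + m)} \<subseteq> {b \<in> {1..<w (j + m)}. b \<notin> A}"
      using w_img_m[OF H] by auto
    show "{b \<in> {1..<w (j + m)}. b \<notin> A} \<subseteq> w ` {i \<in> {1..m}. w i < w (j + m)}"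
    proof
      fix b assume b: "b \<in> {b \<in> {1..<w (j + m)}. b \<notin> A}"
      hence "b \<in> {1..NN} - A" using v by auto
      then obtain i where i: "i \<in> {1..m}" "b = w i" using w_img_m[OF H] by (metis imageE)
      thus "b \<in> w ` {i \<in> {1..m}. w i < w (j + m)}" using b by auto
    qed
  qed
  hence "card {i \<in> {1..m}. w i < w (j + m)} = card {b \<in> {1..<w (j + m)}. b \<notin> A}"
    using card_image[OF injw, of "{i \<in> {1..m}. w i < w (j + m)}"] by simp
  thus ?thesis unfolding std_gt_def rA_def using j by simp
qed

lemma std_gt_perm:
  assumes H: HH
  shows "std_gt m n w permutes {1..n}"
proof (rule bij_imp_permutes)
  have b0: "bij_betw (\<lambda>j. j + m) {1..n} {m+1..NN}"
    unfolding bij_betw_def by (auto simp: inj_on_def add.commute)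
  have b1: "bij_betw w {m+1..NN} A" using w_img_hi[OF H] injw unfolding bij_betw_def by blast
  have "bij_betw (rA A \<circ> w \<circ> (\<lambda>j. j + m)) {1..n} {1..n}"
    using bij_betw_trans[OF bij_betw_trans[OF b0 b1] rA_bij[OF A]] cA by (simp add: o_assoc)
  thus "bij_betw (std_gt m n w) {1..n} {1..n}"
    by (rule bij_betw_cong[THEN iffD1, rotated]) (simp add: std_gt_val[OF H])
  show "\<And>x. x \<notin> {1..n} \<Longrightarrow> std_gt m n w x = x" by (simp add: std_gt_def del: atLeastAtMost_iff)
qed

lemma std_gt_iota:
  assumes H: HH and a: "a \<in> A"
  shows "iota NN w a = beta NN A a + iota n (std_gt m n w) (rA A a)"
proof -
  let ?w2 = "std_gt m n w"
  define s where "s = inv w a"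
  have aN: "a \<in> {1..NN}" using a A by auto
  have s: "s \<in> {1..NN}" "w s = a" using inv_in[OF w aN] unfolding s_def by auto
  hence ms: "m < s" using H_pos[OF H s(1)] a by auto
  have sm: "s - m \<in> {1..n}" using s ms by auto
  have "?w2 (s - m) = rA A a" using std_gt_val[OF H sm] s ms by simp
  hence inv2: "inv ?w2 (rA A a) = s - m" by (rule perm_inv_eq[OF std_gt_perm[OF H]])
  have wA: "w (r + m) \<in> A" if "r \<in> {1..n}" for r using H_pos[OF H, of "r + m"] that by auto
  have "{r \<in> {1..n}. r < s - m \<and> rA A a < ?w2 r} = {r \<in> {1..n}. r + m < s \<and> a < w (r + m)}"
  proof (intro set_eqI iffI)
    fix r assume r: "r \<in> {r \<in> {1..n}. r < s - m \<and> rA A a < ?w2 r}"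
    hence rn: "r \<in> {1..n}" by simp
    thus "r \<in> {r \<in> {1..n}. r + m < s \<and> a < w (r + m)}"
      using r std_gt_val[OF H rn] rA_mono_iff[OF A a wA[OF rn]] by auto
  next
    fix r assume r: "r \<in> {r \<in> {1..n}. r + m < s \<and> a < w (r + m)}"
    hence rn: "r \<in> {1..n}" by simp
    thus "r \<in> {r \<in> {1..n}. r < s - m \<and> rA A a < ?w2 r}"
      using r std_gt_val[OF H rn] rA_mono_iff[OF A a wA[OF rn]] by auto
  qed
  moreover have "(\<lambda>r. r + m) ` {r \<in> {1..n}. r + m < s \<and> a < w (r + m)} = {r \<in> {m+1..NN}. r < s \<and> a < w r}"
  proof (intro set_eqI iffI)
    fix r assume "r \<in> {r \<in> {m+1..NN}. r < s \<and> a < w r}"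
    hence "r - m \<in> {r \<in> {1..n}. r + m < s \<and> a < w (r + m)}" "r = r - m + m" by auto
    thus "r \<in> (\<lambda>r. r + m) ` {r \<in> {1..n}. r + m < s \<and> a < w (r + m)}" by (rule rev_image_eqI)
  qed auto
  moreover have "card ((\<lambda>r. r + m) ` {r \<in> {1..n}. r + m < s \<and> a < w (r + m)}) = card {r \<in> {1..n}. r + m < s \<and> a < w (r + m)}"
    by (rule card_image) (simp add: inj_on_def)
  ultimately have c2: "iota n ?w2 (rA A a) = card {r \<in> {m+1..NN}. r < s \<and> a < w r}"
    unfolding iota_def inv2 by simp
  have "{r \<in> {1..NN}. r < s \<and> a < w r} = {r \<in> {1..m}. a < w r} \<union> {r \<in> {m+1..NN}. r < s \<and> a < w r}"
    using ms s by auto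
  moreover have "card ({r \<in> {1..m}. a < w r} \<union> {r \<in> {m+1..NN}. r < s \<and> a < w r}) =
      card {r \<in> {1..m}. a < w r} + card {r \<in> {m+1..NN}. r < s \<and> a < w r}"
    by (intro card_Un_disjoint) auto
  ultimately have "iota NN w a = card {r \<in> {1..m}. a < w r} + card {r \<in> {m+1..NN}. r < s \<and> a < w r}"
    unfolding iota_def s_def[symmetric] by simp
  thus ?thesis using c2 beta_H[OF H] by simp
qed

end


lemma sum_supported:
  fixes h :: "nat \<times> nat \<Rightarrow> 'a::{finite,field} \<Rightarrow> complex"
  assumes P: "P \<subseteq> pos N"
  shows "(\<Sum>y\<in>(supported N P :: ('a::{finite,field}) mat set). \<Prod>p\<in>P. h p (y (fst p) (snd p)))
         = (\<Prod>p\<in>P. \<Sum>t\<in>(UNIV::'a set). h p t)"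
proof -
  have fP: "finite P" using finite_subset[OF P finite_pos] .
  have "(\<Sum>y\<in>(supported N P :: 'a mat set). \<Prod>p\<in>P. h p (y (fst p) (snd p)))
        = (\<Sum>f\<in>PiE P (\<lambda>_. UNIV::'a set). \<Prod>p\<in>P. h p (f p))"
  proof (rule sum.reindex_bij_witness[of _ "\<lambda>f a b. if (a, b) \<in> P then f (a, b) else 0"
                                        "\<lambda>y. restrict (\<lambda>p. y (fst p) (snd p)) P"])
    fix y :: "'a mat" assume y: "y \<in> supported N P"
    show "(\<lambda>a b. if (a, b) \<in> P then restrict (\<lambda>p. y (fst p) (snd p)) P (a, b) else 0) = y"
      using y unfolding supported_def by (auto simp: fun_eq_iff)
    show "restrict (\<lambda>p. y (fst p) (snd p)) P \<in> PiE P (\<lambda>_. UNIV)" by simp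
    show "(\<Prod>p\<in>P. h p (restrict (\<lambda>p. y (fst p) (snd p)) P p)) = (\<Prod>p\<in>P. h p (y (fst p) (snd p)))"
      by (rule prod.cong) auto
  next
    fix f :: "nat \<times> nat \<Rightarrow> 'a" assume f: "f \<in> PiE P (\<lambda>_. UNIV)"
    show "restrict (\<lambda>p. (\<lambda>a b. if (a, b) \<in> P then f (a, b) else 0) (fst p) (snd p)) P = f"
      using f by (auto simp: fun_eq_iff PiE_def extensional_def)
    show "(\<lambda>a b. if (a, b) \<in> P then f (a, b) else 0) \<in> supported N P"
      using P unfolding supported_def ut_def pos_def by auto
  qed
  also have "\<dots> = (\<Prod>p\<in>P. \<Sum>t\<in>(UNIV::'a set). h p t)"
    using prod_sum_PiE[of P "\<lambda>_. UNIV::'a set" h] fP by simp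
  finally show ?thesis .
qed

lemma card_field_ge2: "2 \<le> card (UNIV :: ('a::{finite,field}) set)"
proof -
  have "{0, 1} \<subseteq> (UNIV :: 'a set)" by simp
  hence "card {0, 1::'a} \<le> card (UNIV :: 'a set)" by (intro card_mono) auto
  thus ?thesis by simp
qed

lemma sum_if0:
  "(\<Sum>t\<in>(UNIV::('a::{finite,field}) set). if t = 0 then a else b) = a + (of_nat (card (UNIV::'a set)) - 1) * (b::complex)"
proof -
  have "(\<Sum>t\<in>(UNIV::'a set). if t = 0 then a else b) = a + (\<Sum>t\<in>(UNIV::'a set) - {0}. if t = 0 then a else b)"
    using sum.remove[of "UNIV::'a set" 0 "\<lambda>t. if t = 0 then a else b"] by simp
  also have "(\<Sum>t\<in>(UNIV::'a set) - {0}. if t = 0 then a else b) = (\<Sum>t\<in>(UNIV::'a set) - {0}. b)"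
    by (rule sum.cong) auto
  also have "\<dots> = of_nat (card (UNIV::'a set) - 1) * b" by simp
  also have "of_nat (card (UNIV::'a set) - 1) = (of_nat (card (UNIV::'a set)) - 1 :: complex)"
    using card_field_ge2[where 'a='a] by (simp add: of_nat_diff)
  finally show ?thesis by simp
qed

lemma gsum_L: "(\<Sum>t\<in>(UNIV::('a::{finite,field}) set). gval d io t) =
   (if d = Suc io then 0 else of_nat (card (UNIV::'a set)))"
proof -
  have "(\<Sum>t\<in>(UNIV::'a set). gval d io t) = (\<Sum>t\<in>(UNIV::'a set). if t = 0 then gval d io (0::'a) else gval d io (1::'a))"
    by (rule sum.cong) (auto simp: gval_def)
  also have "\<dots> = gval d io (0::'a) + (of_nat (card (UNIV::'a set)) - 1) * gval d io (1::'a)" by (rule sum_if0)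
  finally have e: "(\<Sum>t\<in>(UNIV::'a set). gval d io t) = gval d io (0::'a) + (of_nat (card (UNIV::'a set)) - 1) * gval d io (1::'a)" .
  show ?thesis unfolding e by (simp add: gval_def algebra_simps)
qed

lemma gsum_R: "(\<Sum>t\<in>(UNIV::('a::{finite,field}) set). (if t \<noteq> 0 then - 1 / (of_nat (card (UNIV::'a set)) - 1) else 1) * gval d io t) =
   (if d \<le> io then 0 else of_nat (card (UNIV::'a set)))"
proof -
  let ?q = "of_nat (card (UNIV::'a set)) :: complex"
  have q1: "?q - 1 \<noteq> 0" using card_field_ge2[where 'a='a]
    by (metis (mono_tags) One_nat_def numeral_le_one_iff of_nat_1 of_nat_eq_iff right_minus_eq semiring_norm(69))
  let ?c = "- 1 / (?q - 1)"
  have "(\<Sum>t\<in>(UNIV::'a set). (if t \<noteq> 0 then ?c else 1) * gval d io t) =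
        (\<Sum>t\<in>(UNIV::'a set). if t = 0 then gval d io (0::'a) else ?c * gval d io (1::'a))"
    by (rule sum.cong) (auto simp: gval_def)
  also have "\<dots> = gval d io (0::'a) + (?q - 1) * (?c * gval d io (1::'a))" by (rule sum_if0)
  also have "(?q - 1) * (?c * gval d io (1::'a)) = - gval d io (1::'a)" using q1 by (simp add: field_simps)
  finally show ?thesis by (simp add: gval_def)
qed

lemma prod_if0:
  assumes "finite S"
  shows "(\<Prod>p\<in>S. if P p then 0 else (q::complex)) = (if \<exists>p\<in>S. P p then 0 else q ^ card S)"
  using assms by (induction S rule: finite_induct) auto

lemma gval_shift: "gval (d + s) (io + s) t = gval d io t"
  unfolding gval_def by auto


context cfg
begin

definition "Lp = L_pos NN A"
definition "Rp = R_pos NN A"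
definition "Vp = {(i, j) \<in> pos NN. i \<notin> A \<and> j \<le> cA NN A i}"
definition "Up = {(i, j) \<in> pos NN. i \<in> A \<and> cA NN A i < j}"

lemma regions_sub: "Lp \<subseteq> pos NN" "Rp \<subseteq> pos NN" "Vp \<subseteq> pos NN" "Up \<subseteq> pos NN"
  unfolding Lp_def Rp_def Vp_def Up_def L_pos_def R_pos_def by auto

lemma regions_fin: "finite Lp" "finite Rp" "finite Vp" "finite Up"
  using regions_sub finite_subset finite_pos by blast+

lemma pos_split: "pos NN = Lp \<union> (Rp \<union> (Vp \<union> Up))"
  unfolding Lp_def Rp_def Vp_def Up_def L_pos_def R_pos_def by auto

lemma regions_disj: "Lp \<inter> (Rp \<union> (Vp \<union> Up)) = {}" "Rp \<inter> (Vp \<union> Up) = {}" "Vp \<inter> Up = {}"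
  unfolding Lp_def Rp_def Vp_def Up_def L_pos_def R_pos_def by auto

definition Gw :: "nat \<times> nat \<Rightarrow> ('a::{finite,field}) \<Rightarrow> complex" where
  "Gw p t = gval (snd p - fst p) (iota NN w (fst p)) t"

lemma emb_dual_zero: "p \<notin> Vp \<Longrightarrow> emb_dual m n A u' (fst p) (snd p) = 0"
  unfolding emb_dual_def Vp_def by auto

lemma emb_A_zero: "p \<notin> Up \<Longrightarrow> emb_A m n A u (fst p) (snd p) = 0"
  unfolding emb_A_def Up_def by auto

lemma supp_zero: "y \<in> supported N P \<Longrightarrow> p \<notin> P \<Longrightarrow> y (fst p) (snd p) = 0"
  unfolding supported_def by (cases p) auto

lemma supchar_decomp:
  fixes u' u :: "('a::{finite,field}) mat"
  assumes l: "l \<in> supported NN Lp" and r: "r \<in> supported NN Rp"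
  defines "x \<equiv> madd (madd (madd l (emb_dual m n A u')) (emb_A m n A u)) r"
  shows "supchar NN w x = (\<Prod>p\<in>Lp. Gw p (l (fst p) (snd p))) * (\<Prod>p\<in>Rp. Gw p (r (fst p) (snd p))) *
           ((\<Prod>p\<in>Vp. Gw p (emb_dual m n A u' (fst p) (snd p))) * (\<Prod>p\<in>Up. Gw p (emb_A m n A u (fst p) (snd p))))"
proof -
  let ?E' = "emb_dual m n A u'" and ?E = "emb_A m n A u"
  have xv: "x i j = l i j + ?E' i j + ?E i j + r i j" for i j unfolding x_def madd_def by simp
  have xu: "x \<in> ut NN"
  proof -
    have "(i, j) \<in> pos NN" if "x i j \<noteq> 0" for i j
    proof -
      have "l i j \<noteq> 0 \<or> ?E' i j \<noteq> 0 \<or> ?E i j \<noteq> 0 \<or> r i j \<noteq> 0" using that xv by auto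
      hence "(i, j) \<in> Lp \<or> (i, j) \<in> Vp \<or> (i, j) \<in> Up \<or> (i, j) \<in> Rp"
        using supp_zero[OF l, of "(i,j)"] supp_zero[OF r, of "(i,j)"]
          emb_dual_zero[of "(i,j)"] emb_A_zero[of "(i,j)"] by auto
      thus ?thesis using regions_sub by blast
    qed
    thus ?thesis unfolding ut_def pos_def by auto
  qed
  have xL: "x (fst p) (snd p) = l (fst p) (snd p)" if "p \<in> Lp" for p
  proof -
    have "p \<notin> Rp" "p \<notin> Vp" "p \<notin> Up" using that regions_disj by blast+
    thus ?thesis using supp_zero[OF r, of p] emb_dual_zero[of p u'] emb_A_zero[of p u] xv by simp
  qed
  have xR: "x (fst p) (snd p) = r (fst p) (snd p)" if "p \<in> Rp" for p
  proof -
    have "p \<notin> Lp" "p \<notin> Vp" "p \<notin> Up" using that regions_disj by blast+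
    thus ?thesis using supp_zero[OF l, of p] emb_dual_zero[of p u'] emb_A_zero[of p u] xv by simp
  qed
  have xV: "x (fst p) (snd p) = ?E' (fst p) (snd p)" if "p \<in> Vp" for p
  proof -
    have "p \<notin> Lp" "p \<notin> Rp" "p \<notin> Up" using that regions_disj by blast+
    thus ?thesis using supp_zero[OF l, of p] supp_zero[OF r, of p] emb_A_zero[of p u] xv by simp
  qed
  have xU: "x (fst p) (snd p) = ?E (fst p) (snd p)" if "p \<in> Up" for p
  proof -
    have "p \<notin> Lp" "p \<notin> Rp" "p \<notin> Vp" using that regions_disj by blast+
    thus ?thesis using supp_zero[OF l, of p] supp_zero[OF r, of p] emb_dual_zero[of p u'] xv by simp
  qed
  have "supchar NN w x = (\<Prod>p\<in>pos NN. Gw p (x (fst p) (snd p)))"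
    using supchar_formula[OF w, of x] xu unfolding Gw_def by simp
  also have "\<dots> = (\<Prod>p\<in>Lp. Gw p (x (fst p) (snd p))) * ((\<Prod>p\<in>Rp. Gw p (x (fst p) (snd p))) *
      ((\<Prod>p\<in>Vp. Gw p (x (fst p) (snd p))) * (\<Prod>p\<in>Up. Gw p (x (fst p) (snd p)))))"
    unfolding pos_split using regions_fin regions_disj by (simp add: prod.union_disjoint)
  also have "\<dots> = (\<Prod>p\<in>Lp. Gw p (l (fst p) (snd p))) * ((\<Prod>p\<in>Rp. Gw p (r (fst p) (snd p))) *
      ((\<Prod>p\<in>Vp. Gw p (?E' (fst p) (snd p))) * (\<Prod>p\<in>Up. Gw p (?E (fst p) (snd p)))))"
    using xL xR xV xU by simp
  finally show ?thesis by (simp add: mult.assoc)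
qed

definition badL where "badL \<longleftrightarrow> (\<exists>p\<in>Lp. snd p - fst p = Suc (iota NN w (fst p)))"
definition badR where "badR \<longleftrightarrow> (\<exists>p\<in>Rp. snd p - fst p \<le> iota NN w (fst p))"

lemma Dela_formula:
  fixes u' u :: "('a::{finite,field}) mat"
  shows "Dela m n A (supchar NN w) u' u = (if badL \<or> badR then 0 else
     (\<Prod>p\<in>Vp. Gw p (emb_dual m n A u' (fst p) (snd p))) * (\<Prod>p\<in>Up. Gw p (emb_A m n A u (fst p) (snd p))))"
proof -
  let ?q = "of_nat (card (UNIV::'a set)) :: complex"
  let ?c = "- 1 / (?q - 1)"
  let ?K = "(\<Prod>p\<in>Vp. Gw p (emb_dual m n A u' (fst p) (snd p))) * (\<Prod>p\<in>Up. Gw p (emb_A m n A u (fst p) (snd p)))"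
  let ?x = "\<lambda>l r. madd (madd (madd l (emb_dual m n A u')) (emb_A m n A u)) r"
  let ?wt = "\<lambda>t::'a. if t \<noteq> 0 then ?c else 1"
  have q0: "?q \<noteq> 0" by simp
  have pw: "?c ^ card {(i, j). r i j \<noteq> 0} = (\<Prod>p\<in>Rp. ?wt (r (fst p) (snd p)))"
    if r: "r \<in> (supported NN Rp :: 'a mat set)" for r
  proof -
    have "{(i, j). r i j \<noteq> 0} = {p \<in> Rp. r (fst p) (snd p) \<noteq> 0}"
      using supp_zero[OF r] by fastforce
    hence "?c ^ card {(i, j). r i j \<noteq> 0} = (\<Prod>p\<in>{p \<in> Rp. r (fst p) (snd p) \<noteq> 0}. ?c)" by simp
    also have "\<dots> = (\<Prod>p\<in>Rp. ?wt (r (fst p) (snd p)))"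
      using prod.inter_filter[OF regions_fin(2), of "\<lambda>_. ?c" "\<lambda>p. r (fst p) (snd p) \<noteq> 0"] by simp
    finally show ?thesis .
  qed
  have inner: "?c ^ card {(i, j). r i j \<noteq> 0} * supchar NN w (?x l r) =
      ((\<Prod>p\<in>Lp. Gw p (l (fst p) (snd p))) * ?K) * (\<Prod>p\<in>Rp. ?wt (r (fst p) (snd p)) * Gw p (r (fst p) (snd p)))"
    if l: "l \<in> (supported NN Lp :: 'a mat set)" and r: "r \<in> (supported NN Rp :: 'a mat set)" for l r
    unfolding pw[OF r] supchar_decomp[OF l r] prod.distrib by (simp add: algebra_simps)
  have SR: "(\<Sum>r\<in>(supported NN Rp :: 'a mat set). \<Prod>p\<in>Rp. ?wt (r (fst p) (snd p)) * Gw p (r (fst p) (snd p)))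
      = (\<Prod>p\<in>Rp. if snd p - fst p \<le> iota NN w (fst p) then 0 else ?q)"
  proof -
    have "(\<Sum>r\<in>(supported NN Rp :: 'a mat set). \<Prod>p\<in>Rp. ?wt (r (fst p) (snd p)) * Gw p (r (fst p) (snd p)))
      = (\<Prod>p\<in>Rp. \<Sum>t\<in>(UNIV::'a set). ?wt t * Gw p t)"
      by (rule sum_supported[OF regions_sub(2), of "\<lambda>p t. ?wt t * Gw p t"])
    also have "\<dots> = (\<Prod>p\<in>Rp. if snd p - fst p \<le> iota NN w (fst p) then 0 else ?q)"
      by (simp only: Gw_def gsum_R)
    finally show ?thesis .
  qed
  have SL: "(\<Sum>l\<in>(supported NN Lp :: 'a mat set). \<Prod>p\<in>Lp. Gw p (l (fst p) (snd p)))
      = (\<Prod>p\<in>Lp. if snd p - fst p = Suc (iota NN w (fst p)) then 0 else ?q)"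
  proof -
    have "(\<Sum>l\<in>(supported NN Lp :: 'a mat set). \<Prod>p\<in>Lp. Gw p (l (fst p) (snd p)))
      = (\<Prod>p\<in>Lp. \<Sum>t\<in>(UNIV::'a set). Gw p t)"
      by (rule sum_supported[OF regions_sub(1), of "\<lambda>p t. Gw p t"])
    also have "\<dots> = (\<Prod>p\<in>Lp. if snd p - fst p = Suc (iota NN w (fst p)) then 0 else ?q)"
      by (simp only: Gw_def gsum_L)
    finally show ?thesis .
  qed
  have "Dela m n A (supchar NN w) u' u = (1 / ?q ^ (card Lp + card Rp)) *
     (\<Sum>l\<in>(supported NN Lp :: 'a mat set). \<Sum>r\<in>(supported NN Rp :: 'a mat set).
        ?c ^ card {(i, j). r i j \<noteq> 0} * supchar NN w (?x l r))"
    unfolding Dela_def Let_def Lp_def Rp_def ..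
  also have "(\<Sum>l\<in>(supported NN Lp :: 'a mat set). \<Sum>r\<in>(supported NN Rp :: 'a mat set).
        ?c ^ card {(i, j). r i j \<noteq> 0} * supchar NN w (?x l r)) =
     (\<Sum>l\<in>(supported NN Lp :: 'a mat set). ((\<Prod>p\<in>Lp. Gw p (l (fst p) (snd p))) * ?K) *
        (\<Sum>r\<in>(supported NN Rp :: 'a mat set). \<Prod>p\<in>Rp. ?wt (r (fst p) (snd p)) * Gw p (r (fst p) (snd p))))"
  proof (rule sum.cong[OF refl])
    fix l assume l: "l \<in> (supported NN Lp :: 'a mat set)"
    have "(\<Sum>r\<in>(supported NN Rp :: 'a mat set). ?c ^ card {(i, j). r i j \<noteq> 0} * supchar NN w (?x l r)) =
      (\<Sum>r\<in>(supported NN Rp :: 'a mat set). ((\<Prod>p\<in>Lp. Gw p (l (fst p) (snd p))) * ?K) * (\<Prod>p\<in>Rp. ?wt (r (fst p) (snd p)) * Gw p (r (fst p) (snd p))))"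
      by (rule sum.cong[OF refl]) (rule inner[OF l])
    thus "(\<Sum>r\<in>(supported NN Rp :: 'a mat set). ?c ^ card {(i, j). r i j \<noteq> 0} * supchar NN w (?x l r)) =
      ((\<Prod>p\<in>Lp. Gw p (l (fst p) (snd p))) * ?K) *
        (\<Sum>r\<in>(supported NN Rp :: 'a mat set). \<Prod>p\<in>Rp. ?wt (r (fst p) (snd p)) * Gw p (r (fst p) (snd p)))"
      by (simp only: sum_distrib_left)
  qed
  also have "\<dots> = (\<Sum>l\<in>(supported NN Lp :: 'a mat set). \<Prod>p\<in>Lp. Gw p (l (fst p) (snd p))) * ?K *
        (\<Prod>p\<in>Rp. if snd p - fst p \<le> iota NN w (fst p) then 0 else ?q)"
    unfolding SR by (simp add: sum_distrib_right)
  also have "\<dots> = (\<Prod>p\<in>Lp. if snd p - fst p = Suc (iota NN w (fst p)) then 0 else ?q) * ?K *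
        (\<Prod>p\<in>Rp. if snd p - fst p \<le> iota NN w (fst p) then 0 else ?q)"
    unfolding SL ..
  also have "\<dots> = (if badL then 0 else ?q ^ card Lp) * ?K * (if badR then 0 else ?q ^ card Rp)"
    unfolding badL_def badR_def using regions_fin by (simp add: prod_if0)
  finally show ?thesis using q0 by (simp add: power_add)
qed

lemma cA_le: "cA NN A i \<le> NN" unfolding cA_def by simp

lemma badL_iff: "badL \<longleftrightarrow> (\<exists>i\<in>A. iota NN w i < beta NN A i)"
proof
  assume badL
  then obtain p where p: "p \<in> Lp" "snd p - fst p = Suc (iota NN w (fst p))" unfolding badL_def by blast
  obtain i j where ij: "p = (i, j)" by (cases p)
  have i: "i \<in> A" "1 \<le> i" "i < j" "j \<le> NN" "j \<le> cA NN A i"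
    using p(1) unfolding ij Lp_def L_pos_def pos_def by auto
  have "cA NN A i = i + beta NN A i" using cA_beta[OF A] i by simp
  thus "\<exists>i\<in>A. iota NN w i < beta NN A i" using i p(2) ij by (intro bexI[of _ i]) auto
next
  assume "\<exists>i\<in>A. iota NN w i < beta NN A i"
  then obtain i where i: "i \<in> A" "iota NN w i < beta NN A i" by blast
  have iN: "1 \<le> i" "i \<le> NN" using i A by auto
  have c: "cA NN A i = i + beta NN A i" using cA_beta[OF A iN(2)] .
  have "(i, i + Suc (iota NN w i)) \<in> Lp"
    unfolding Lp_def L_pos_def pos_def using i iN c cA_le[of i] by auto
  thus badL unfolding badL_def by force
qed

lemma badR_iff: "badR \<longleftrightarrow> (\<exists>i\<in>{1..NN} - A. beta NN A i < iota NN w i)"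
proof
  assume badR
  then obtain p where p: "p \<in> Rp" "snd p - fst p \<le> iota NN w (fst p)" unfolding badR_def by blast
  obtain i j where ij: "p = (i, j)" by (cases p)
  have i: "i \<notin> A" "1 \<le> i" "i < j" "j \<le> NN" "cA NN A i < j"
    using p(1) unfolding ij Rp_def R_pos_def pos_def by auto
  have "cA NN A i = i + beta NN A i" using cA_beta[OF A] i by simp
  thus "\<exists>i\<in>{1..NN} - A. beta NN A i < iota NN w i" using i p(2) ij by (intro bexI[of _ i]) auto
next
  assume "\<exists>i\<in>{1..NN} - A. beta NN A i < iota NN w i"
  then obtain i where i: "i \<in> {1..NN} - A" "beta NN A i < iota NN w i" by blast
  have c: "cA NN A i = i + beta NN A i" using cA_beta[OF A] i by simp
  have "iota NN w i \<le> NN - i" by (rule iota_le[OF w])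
  hence "(i, i + Suc (beta NN A i)) \<in> Rp"
    unfolding Rp_def R_pos_def pos_def using i c by auto
  thus badR unfolding badR_def using i by force
qed

lemma bad_iff: "(badL \<or> badR) \<longleftrightarrow> \<not> HH"
proof
  assume "badL \<or> badR"
  thus "\<not> HH" unfolding badL_iff badR_iff using bound_A bound_NA by force
next
  assume "\<not> HH"
  thus "badL \<or> badR" unfolding badL_iff badR_iff using conv by force
qed

lemma cA_NA:
  assumes i: "i \<in> {1..NN} - A"
  shows "cA NN A i = m + card {a \<in> A. a < i}"
proof -
  have "A = {a \<in> A. a < i} \<union> {a \<in> A. i < a}" using i by (auto simp: not_less_iff_gr_or_eq)
  moreover have "card ({a \<in> A. a < i} \<union> {a \<in> A. i < a}) = card {a \<in> A. a < i} + card {a \<in> A. i < a}"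
    using finite_subset[OF A] by (intro card_Un_disjoint) auto
  ultimately have "n = card {a \<in> A. a < i} + card {a \<in> A. i < a}" using cA by simp
  thus ?thesis unfolding cA_def by simp
qed

lemma cA_A:
  assumes i: "i \<in> A"
  shows "cA NN A i = m + rA A i"
proof -
  have "A = {a \<in> A. a \<le> i} \<union> {a \<in> A. i < a}" by auto
  moreover have "card ({a \<in> A. a \<le> i} \<union> {a \<in> A. i < a}) = card {a \<in> A. a \<le> i} + card {a \<in> A. i < a}"
    using finite_subset[OF A] by (intro card_Un_disjoint) auto
  ultimately have "n = card {a \<in> A. a \<le> i} + card {a \<in> A. i < a}" using cA by simp
  thus ?thesis unfolding cA_def using rA_card[OF A i] by simp
qed

lemma kle: "card {a \<in> A. a < i} \<le> i - 1"
proof -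
  have "{a \<in> A. a < i} \<subseteq> {1..<i}" using A by auto
  hence "card {a \<in> A. a < i} \<le> card {1..<i}" by (intro card_mono) auto
  thus ?thesis by simp
qed

definition "phiV p = (rNA A (fst p), snd p - card {a \<in> A. a < fst p})"
definition "phiU p = (rA A (fst p), snd p - m)"

lemma bij_phiV: "bij_betw phiV Vp (pos m)"
proof -
  have rb: "bij_betw (rNA A) ({1..NN} - A) {1..m}" using rNA_bij[OF A] NNm by simp
  have VpD: "i \<in> {1..NN} - A \<and> i < j \<and> j \<le> m + card {a \<in> A. a < i}" if "(i, j) \<in> Vp" for i j
    using that cA_NA[of i] unfolding Vp_def pos_def by auto
  have inj: "inj_on phiV Vp"
  proof (rule inj_onI)
    fix p p' assume p: "p \<in> Vp" and p': "p' \<in> Vp" and e: "phiV p = phiV p'"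
    obtain i j i' j' where ij: "p = (i, j)" "p' = (i', j')" by (cases p, cases p')
    have d: "i \<in> {1..NN} - A" "i < j" "i' \<in> {1..NN} - A" "i' < j'" using VpD p p' ij by auto
    have "rNA A i = rNA A i'" using e ij unfolding phiV_def by simp
    hence ii: "i = i'" using rb d unfolding bij_betw_def inj_on_def by blast
    have "j - card {a \<in> A. a < i} = j' - card {a \<in> A. a < i}" using e ij ii unfolding phiV_def by simp
    moreover have "card {a \<in> A. a < i} \<le> j" "card {a \<in> A. a < i} \<le> j'" using kle[of i] d ii by auto
    ultimately have "j = j'" by simp
    thus "p = p'" using ij ii by simp
  qed
  have "phiV ` Vp = pos m"
  proof
    show "phiV ` Vp \<subseteq> pos m"
    proof
      fix q assume "q \<in> phiV ` Vp"
      then obtain i j where ij: "(i, j) \<in> Vp" "q = phiV (i, j)" by auto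
      have d: "i \<in> {1..NN} - A" "i < j" "j \<le> m + card {a \<in> A. a < i}" using VpD ij by auto
      have r: "rNA A i \<in> {1..m}" using rb d unfolding bij_betw_def by blast
      have k: "card {a \<in> A. a < i} \<le> i" using kle[of i] by simp
      show "q \<in> pos m" unfolding ij phiV_def pos_def using r d k by (auto simp: rNA_def)
    qed
    show "pos m \<subseteq> phiV ` Vp"
    proof
      fix q assume q: "q \<in> pos m"
      obtain a b where ab: "q = (a, b)" by (cases q)
      have ab2: "1 \<le> a" "a < b" "b \<le> m" using q ab unfolding pos_def by auto
      hence "a \<in> rNA A ` ({1..NN} - A)" using rb unfolding bij_betw_def by auto
      then obtain i where i: "i \<in> {1..NN} - A" "rNA A i = a" by blast
      define k where "k = card {a \<in> A. a < i}"
      have k: "k \<le> i" using kle[of i] unfolding k_def by simp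
      have ai: "a = i - k" using i unfolding rNA_def k_def by simp
      have "(i, b + k) \<in> Vp" unfolding Vp_def pos_def using i ab2 ai k cA_NA[OF i(1)] cA_le[of i]
        unfolding k_def by auto
      moreover have "phiV (i, b + k) = q" unfolding phiV_def ab using i k_def by simp
      ultimately show "q \<in> phiV ` Vp" by force
    qed
  qed
  thus ?thesis using inj unfolding bij_betw_def by blast
qed

lemma bij_phiU: "bij_betw phiU Up (pos n)"
proof -
  have rb: "bij_betw (rA A) A {1..n}" using rA_bij[OF A] cA by simp
  have UpD: "i \<in> A \<and> m + rA A i < j \<and> j \<le> NN" if "(i, j) \<in> Up" for i j
    using that cA_A[of i] unfolding Up_def pos_def by auto
  have inj: "inj_on phiU Up"
  proof (rule inj_onI)
    fix p p' assume p: "p \<in> Up" and p': "p' \<in> Up" and e: "phiU p = phiU p'"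
    obtain i j i' j' where ij: "p = (i, j)" "p' = (i', j')" by (cases p, cases p')
    have d0: "i \<in> A \<and> m + rA A i < j \<and> j \<le> NN" "i' \<in> A \<and> m + rA A i' < j' \<and> j' \<le> NN"
      using UpD p p' ij by auto
    hence d: "i \<in> A" "m < j" "i' \<in> A" "m < j'" by auto
    have "rA A i = rA A i'" using e ij unfolding phiU_def by simp
    hence ii: "i = i'" using rb d unfolding bij_betw_def inj_on_def by blast
    have "j - m = j' - m" using e ij unfolding phiU_def by simp
    hence "j = j'" using d by simp
    thus "p = p'" using ij ii by simp
  qed
  have "phiU ` Up = pos n"
  proof
    show "phiU ` Up \<subseteq> pos n"
    proof
      fix q assume "q \<in> phiU ` Up"
      then obtain i j where ij: "(i, j) \<in> Up" "q = phiU (i, j)" by auto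
      have d: "i \<in> A" "m + rA A i < j" "j \<le> NN" using UpD ij by auto
      have r: "rA A i \<in> {1..n}" using rb d unfolding bij_betw_def by blast
      show "q \<in> pos n" unfolding ij phiU_def pos_def using r d by auto
    qed
    show "pos n \<subseteq> phiU ` Up"
    proof
      fix q assume q: "q \<in> pos n"
      obtain a b where ab: "q = (a, b)" by (cases q)
      have ab2: "1 \<le> a" "a < b" "b \<le> n" using q ab unfolding pos_def by auto
      hence "a \<in> rA A ` A" using rb unfolding bij_betw_def by auto
      then obtain i where i: "i \<in> A" "rA A i = a" by blast
      have iN: "1 \<le> i" "i \<le> NN" using i A by auto
      have "cA NN A i = i + beta NN A i" using cA_beta[OF A iN(2)] .
      hence "i \<le> cA NN A i" by simp
      hence "(i, b + m) \<in> Up" unfolding Up_def pos_def using i iN ab2 cA_A[OF i(1)] by auto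
      moreover have "phiU (i, b + m) = q" unfolding phiU_def ab using i by simp
      ultimately show "q \<in> phiU ` Up" by force
    qed
  qed
  thus ?thesis using inj unfolding bij_betw_def by blast
qed

lemma K_V:
  fixes u' :: "('a::{finite,field}) mat"
  assumes H: HH and u': "u' \<in> ut m"
  shows "(\<Prod>p\<in>Vp. Gw p (emb_dual m n A u' (fst p) (snd p))) = supchar m (std_le m n w) u'"
proof -
  have "supchar m (std_le m n w) u' = (\<Prod>q\<in>pos m. gval (snd q - fst q) (iota m (std_le m n w) (fst q)) (u' (fst q) (snd q)))"
    using supchar_formula[OF std_le_perm[OF H], of u'] u' by simp
  also have "\<dots> = (\<Prod>p\<in>Vp. (\<lambda>q. gval (snd q - fst q) (iota m (std_le m n w) (fst q)) (u' (fst q) (snd q))) (phiV p))"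
    by (rule prod.reindex_bij_betw[OF bij_phiV, symmetric])
  also have "\<dots> = (\<Prod>p\<in>Vp. Gw p (emb_dual m n A u' (fst p) (snd p)))"
  proof (rule prod.cong[OF refl])
    fix p assume p: "p \<in> Vp"
    obtain i j where ij: "p = (i, j)" by (cases p)
    have d: "i \<in> {1..NN} - A" "i < j" "j \<le> cA NN A i" "(i, j) \<in> pos NN" using p ij unfolding Vp_def pos_def by auto
    define k where "k = card {a \<in> A. a < i}"
    have k: "k \<le> i" using kle[of i] unfolding k_def by simp
    have E: "emb_dual m n A u' i j = u' (i - k) (j - k)" unfolding emb_dual_def k_def using d by (simp add: Let_def)
    have io: "iota m (std_le m n w) (rNA A i) = iota NN w i" by (rule std_le_iota[OF H d(1)])
    have "(j - k) - (i - k) = j - i" using k d by simp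
    thus "gval (snd (phiV p) - fst (phiV p)) (iota m (std_le m n w) (fst (phiV p))) (u' (fst (phiV p)) (snd (phiV p)))
        = Gw p (emb_dual m n A u' (fst p) (snd p))"
      unfolding phiV_def ij Gw_def using E io by (simp add: rNA_def k_def)
  qed
  finally show ?thesis by simp
qed

lemma K_U:
  fixes u :: "('a::{finite,field}) mat"
  assumes H: HH and u: "u \<in> ut n"
  shows "(\<Prod>p\<in>Up. Gw p (emb_A m n A u (fst p) (snd p))) = supchar n (std_gt m n w) u"
proof -
  have "supchar n (std_gt m n w) u = (\<Prod>q\<in>pos n. gval (snd q - fst q) (iota n (std_gt m n w) (fst q)) (u (fst q) (snd q)))"
    using supchar_formula[OF std_gt_perm[OF H], of u] u by simp
  also have "\<dots> = (\<Prod>p\<in>Up. (\<lambda>q. gval (snd q - fst q) (iota n (std_gt m n w) (fst q)) (u (fst q) (snd q))) (phiU p))"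
    by (rule prod.reindex_bij_betw[OF bij_phiU, symmetric])
  also have "\<dots> = (\<Prod>p\<in>Up. Gw p (emb_A m n A u (fst p) (snd p)))"
  proof (rule prod.cong[OF refl])
    fix p assume p: "p \<in> Up"
    obtain i j where ij: "p = (i, j)" by (cases p)
    have d: "i \<in> A" "cA NN A i < j" "(i, j) \<in> pos NN" using p ij unfolding Up_def by auto
    have iN: "i \<le> NN" using d(1) A by auto
    have E: "emb_A m n A u i j = u (rA A i) (j - m)" unfolding emb_A_def rA_def using d by simp
    have io: "iota NN w i = beta NN A i + iota n (std_gt m n w) (rA A i)" by (rule std_gt_iota[OF H d(1)])
    have c1: "cA NN A i = m + rA A i" by (rule cA_A[OF d(1)])
    have c2: "cA NN A i = i + beta NN A i" by (rule cA_beta[OF A iN])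
    have "j - i = (j - m - rA A i) + beta NN A i" using c1 c2 d(2) by simp
    hence "Gw p (emb_A m n A u (fst p) (snd p)) = gval ((j - m - rA A i) + beta NN A i) (iota n (std_gt m n w) (rA A i) + beta NN A i) (u (rA A i) (j - m))"
      unfolding Gw_def ij using E io by (simp add: add.commute)
    thus "gval (snd (phiU p) - fst (phiU p)) (iota n (std_gt m n w) (fst (phiU p))) (u (fst (phiU p)) (snd (phiU p)))
        = Gw p (emb_A m n A u (fst p) (snd p))"
      unfolding phiU_def ij gval_shift by simp
  qed
  finally show ?thesis by simp
qed

lemma main:
  fixes u' u :: "('a::{finite,field}) mat"
  assumes u': "u' \<in> ut m" and u: "u \<in> ut n"
  shows "Dela m n A (supchar NN w) u' u =
           (if {i \<in> {1..NN}. w i \<in> A} = {m+1..NN}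
            then supchar m (std_le m n w) u' * supchar n (std_gt m n w) u
            else 0)"
proof (cases HH)
  case True
  hence "\<not> (badL \<or> badR)" using bad_iff by simp
  thus ?thesis using True Dela_formula[of u' u] K_V[OF True u'] K_U[OF True u] unfolding HH_def by simp
next
  case False
  hence "badL \<or> badR" using bad_iff by simp
  thus ?thesis using False Dela_formula[of u' u] unfolding HH_def by simp
qed

end


theorem theorem4p5:
  fixes m n :: nat and A :: "nat set" and w :: "nat \<Rightarrow> nat"
    and u' u :: "('a::{finite,field}) mat"
  assumes "A \<subseteq> {1..m+n}" and "card A = n"
    and "w permutes {1..m+n}"
    and "u' \<in> ut m" and "u \<in> ut n"
  shows "Dela m n A (supchar (m + n) w) u' u =
           (if {i \<in> {1..m+n}. w i \<in> A} = {m+1..m+n}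
            then supchar m (std_le m n w) u' * supchar n (std_gt m n w) u
            else 0)"
proof -
  interpret cfg m n A w using assms(1,2,3) by unfold_locales
  show ?thesis by (rule main[OF assms(4,5)])
qed

end
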